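(* Under the standing setup (assumptions (A1)–(A4)), let $(W_n)_n$ be the wf-process and $X$ a random variable with distribution function $F$. (i) If $\mu<r$, then $q_W<1$. (ii) Assume $r\le m\mu\big(1-\sqrt{1-1/m}\big)$. If $\operatorname{Var}X<\frac{(m\mu-r)^2}{m(m-1)}-\mu^2$, then $q_W=1$.
   Context: Standing setup. On a probability space $(\Omega,\mathcal F,\mathrm P)$ there are three mutually independent double arrays $(D_n^k)_{n\ge0,k\ge1}$, $(X_n^k)_{n\ge0,k\ge1}$, $(R_n^k)_{n\ge0,k\ge1}$, each consisting of i.i.d. random variables: $D_n^k\in\{0,1,2,\dots\}$ with law $p_j=\mathrm P[D_n^k=j]$ and mean $m$; $X_n^k\ge0$ real-valued with continuous distribution function $F$ and mean $\mu$; $R_n^k\ge0$ real-valued with mean $r$. Standing assumptions: (A1) $1<m<\infty$, $r<\infty$, $0<\mu<\infty$; (A2) $p_0>0$ and $p_k>0$ for some $k\ge2$; (A3) for the process under consideration started at $1$, every finite positive state is reached with positive probability; (A4) $D_n^k,X_n^k,R_n^k$ have finite variances. Write $D_n(k)=\sum_{j=1}^kD_n^j$, $R_n(k)=\sum_{j=1}^kR_n^j$. For $(x_k)_{k=1}^t$ let $x_{1,t}\le\dots\le x_{t,t}$ be its order statistics. The weakest-first counting function is $N(0,\varnothing,s)=0$ and, for $t\ge1$, $N(t,(x_k)_{k=1}^t,s)=0$ if $x_{1,t}>s$, otherwise $\max\{1\le k\le t:\sum_{j=1}^kx_{j,t}\le s\}$. The wf-process is $W_0=1$, $W_{n+1}=N\big(D_n(W_n),(X_n^k)_{k=1}^{D_n(W_n)},R_n(W_n)\big)$,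 and $q_W=\mathrm P[\lim_nW_n=0\mid W_0=1]$. *)

theory Defs
  imports "HOL-Probability.Probability"
begin

text \<open>Weakest-first counting function N(t, (x_k)_{k=1}^t, s); the list xs is (x_1,...,x_t),
  so t = length xs. Order statistics are given by sorting.\<close>
definition wf_count :: "real list \<Rightarrow> real \<Rightarrow> nat" where
  "wf_count xs s =
     (if xs = [] then 0
      else if hd (sort xs) > s then 0
      else (GREATEST k. 1 \<le> k \<and> k \<le> length xs \<and> sum_list (take k (sort xs)) \<le> s))"

primrec wf_proc :: "(nat \<Rightarrow> nat \<Rightarrow> 'a \<Rightarrow> nat) \<Rightarrow> (nat \<Rightarrow> nat \<Rightarrow> 'a \<Rightarrow> real) \<Rightarrow>
    (nat \<Rightarrow> nat \<Rightarrow> 'a \<Rightarrow> real) \<Rightarrow> nat \<Rightarrow> 'a \<Rightarrow> nat" where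
  "wf_proc D X R 0 \<omega> = 1"
| "wf_proc D X R (Suc n) \<omega> =
     (let w = wf_proc D X R n \<omega>;
          d = (\<Sum>j=1..w. D n j \<omega>)
      in wf_count (map (\<lambda>k. X n k \<omega>) [1..<d+1]) (\<Sum>j=1..w. R n j \<omega>))"

text \<open>All variables of the three arrays collected into one real-valued family,
  so that their joint (mutual) independence can be stated with indep_vars.\<close>
definition wf_family :: "(nat \<Rightarrow> nat \<Rightarrow> 'a \<Rightarrow> nat) \<Rightarrow> (nat \<Rightarrow> nat \<Rightarrow> 'a \<Rightarrow> real) \<Rightarrow>
    (nat \<Rightarrow> nat \<Rightarrow> 'a \<Rightarrow> real) \<Rightarrow> (nat \<times> nat) + (nat \<times> nat) + (nat \<times> nat) \<Rightarrow> 'a \<Rightarrow> real" where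
  "wf_family D X R i =
     (case i of Inl (n, k) \<Rightarrow> (\<lambda>\<omega>. real (D n k \<omega>))
              | Inr (Inl (n, k)) \<Rightarrow> X n k
              | Inr (Inr (n, k)) \<Rightarrow> R n k)"

definition wf_index :: "((nat \<times> nat) + (nat \<times> nat) + (nat \<times> nat)) set" where
  "wf_index = {i. case i of Inl (n, k) \<Rightarrow> 1 \<le> k
                         | Inr (Inl (n, k)) \<Rightarrow> 1 \<le> k
                         | Inr (Inr (n, k)) \<Rightarrow> 1 \<le> k}"

end

theory Submission
  imports Defs
begin

locale wfs = prob_space M for M :: "'a measure" +
  fixes D :: "nat \<Rightarrow> nat \<Rightarrow> 'a \<Rightarrow> nat" and X R :: "nat \<Rightarrow> nat \<Rightarrow> 'a \<Rightarrow> real"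
  assumes D_meas: "\<And>n k. D n k \<in> measurable M (count_space UNIV)"
    and X_meas: "\<And>n k. X n k \<in> borel_measurable M"
    and R_meas: "\<And>n k. R n k \<in> borel_measurable M"
    and indep: "indep_vars (\<lambda>_. borel) (wf_family D X R) wf_index"
begin

abbreviation "Fam \<equiv> wf_family D X R"

definition gen :: "((nat \<times> nat) + (nat \<times> nat) + (nat \<times> nat)) set \<Rightarrow> 'a set set" where
  "gen J = (\<Union>i\<in>J. {Fam i -` A \<inter> space M | A. A \<in> sets borel})"

definition Sig :: "((nat \<times> nat) + (nat \<times> nat) + (nat \<times> nat)) set \<Rightarrow> 'a measure" where
  "Sig J = sigma (space M) (gen J)"

lemma gen_Pow: "gen J \<subseteq> Pow (space M)"
  unfolding gen_def by auto

lemma sets_Sig: "sets (Sig J) = sigma_sets (space M) (gen J)"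
  unfolding Sig_def using gen_Pow by (rule sets_measure_of)

lemma space_Sig[simp]: "space (Sig J) = space M"
  unfolding Sig_def using gen_Pow by (rule space_measure_of)

lemma Fam_meas: "Fam i \<in> borel_measurable M"
proof (cases i)
  case (Inl a) then show ?thesis using D_meas
    by (cases a) (auto simp: wf_family_def)
next
  case (Inr b) then show ?thesis using X_meas R_meas
    by (cases b) (auto simp: wf_family_def split: prod.split)
qed

lemma Fam_Sig: "i \<in> J \<Longrightarrow> Fam i \<in> borel_measurable (Sig J)"
  unfolding measurable_def
  by (auto simp: sets_Sig gen_def intro!: sigma_sets.Basic)

lemma gen_sub: "gen J \<subseteq> sets M"
  unfolding gen_def using Fam_meas by (auto intro: measurable_sets)

lemma sets_Sig_sub: "sets (Sig J) \<subseteq> sets M"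
  unfolding sets_Sig using gen_sub by (metis sets.sigma_sets_subset)

lemma subalg_Sig: "subalgebra M (Sig J)"
  unfolding subalgebra_def using sets_Sig_sub by auto

lemma indep_Sig:
  assumes "J1 \<inter> J2 = {}" "J1 \<subseteq> wf_index" "J2 \<subseteq> wf_index"
  shows "indep_set (sets (Sig J1)) (sets (Sig J2))"
proof -
  let ?E = "\<lambda>i. {Fam i -` A \<inter> space M | A. A \<in> sets borel}"
  have i1: "indep_sets ?E wf_index" using indep unfolding indep_vars_def2 by auto
  have i2: "indep_sets ?E (\<Union>j\<in>UNIV. case_bool J1 J2 j)"
    by (rule indep_sets_mono_index[OF _ i1]) (use assms in \<open>auto split: bool.splits\<close>)
  have "indep_sets (\<lambda>j. sigma_sets (space M) (\<Union>i\<in>case_bool J1 J2 j. ?E i)) UNIV"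
  proof (rule indep_sets_collect_sigma[OF i2])
    fix i j show "Int_stable (?E i)"
      apply (auto simp: Int_stable_def)
      apply (rule_tac x="A \<inter> Aa" in exI)
      apply auto
      done
  next
    show "disjoint_family_on (case_bool J1 J2) UNIV"
      using assms by (auto simp: disjoint_family_on_def split: bool.split)
  qed
  then show ?thesis
    unfolding indep_set_def sets_Sig gen_def
    by (rule indep_sets_cong[THEN iffD1, rotated -1]) (auto split: bool.split)
qed

lemma indep_prob:
  assumes "J1 \<inter> J2 = {}" "J1 \<subseteq> wf_index" "J2 \<subseteq> wf_index"
    and "a \<in> sets (Sig J1)" "b \<in> sets (Sig J2)"
  shows "prob (a \<inter> b) = prob a * prob b"
  using indep_setD[OF indep_Sig[OF assms(1-3)] assms(4,5)] .

lemma indep_nn: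
  assumes J: "J1 \<inter> J2 = {}" "J1 \<subseteq> wf_index" "J2 \<subseteq> wf_index"
    and a: "a \<in> sets (Sig J1)" and g: "g \<in> borel_measurable (Sig J2)"
  shows "(\<integral>\<^sup>+\<omega>. indicator a \<omega> * g \<omega> \<partial>M) = emeasure M a * (\<integral>\<^sup>+\<omega>. g \<omega> \<partial>M)"
  using g
proof (induction rule: borel_measurable_induct)
  case (cong f g)
  have "\<And>x. x \<in> space M \<Longrightarrow> f x = g x" using cong by simp
  then show ?case using cong(4)
    by (metis (no_types, lifting) nn_integral_cong)
next
  case (set A)
  have aM: "a \<in> sets M" and AM: "A \<in> sets M" using a set sets_Sig_sub by auto
  have "(\<integral>\<^sup>+\<omega>. indicator a \<omega> * indicator A \<omega> \<partial>M) = emeasure M (a \<inter> A)"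
    using aM AM by (simp add: indicator_inter_arith[symmetric])
  also have "\<dots> = ennreal (prob (a \<inter> A))" using aM AM by (simp add: emeasure_eq_measure)
  also have "\<dots> = ennreal (prob a) * ennreal (prob A)"
    using indep_prob[OF J a set] by (simp add: ennreal_mult)
  finally show ?case using aM AM by (simp add: emeasure_eq_measure)
next
  case (mult u c)
  have um: "u \<in> borel_measurable M" using measurable_from_subalg[OF subalg_Sig mult(2)] .
  have aM: "a \<in> sets M" using a sets_Sig_sub by auto
  have "(\<integral>\<^sup>+\<omega>. indicator a \<omega> * (c * u \<omega>) \<partial>M) = c * (\<integral>\<^sup>+\<omega>. indicator a \<omega> * u \<omega> \<partial>M)"
    using um aM by (subst nn_integral_cmult[symmetric]) (auto simp: ac_simps)
  then show ?case using mult um by (simp add: nn_integral_cmult ac_simps)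
next
  case (add u v)
  have um: "u \<in> borel_measurable M" using measurable_from_subalg[OF subalg_Sig \<open>u \<in> borel_measurable (Sig J2)\<close>] .
  have vm: "v \<in> borel_measurable M" using measurable_from_subalg[OF subalg_Sig \<open>v \<in> borel_measurable (Sig J2)\<close>] .
  have aM: "a \<in> sets M" using a sets_Sig_sub by auto
  have "(\<integral>\<^sup>+\<omega>. indicator a \<omega> * (v \<omega> + u \<omega>) \<partial>M) =
    (\<integral>\<^sup>+\<omega>. indicator a \<omega> * v \<omega> \<partial>M) + (\<integral>\<^sup>+\<omega>. indicator a \<omega> * u \<omega> \<partial>M)"
    using um vm aM by (subst nn_integral_add[symmetric]) (auto simp: distrib_left)
  then show ?case using add um vm by (simp add: nn_integral_add distrib_left)
next
  case (seq U)
  have Um: "\<And>i. U i \<in> borel_measurable M" using measurable_from_subalg[OF subalg_Sig seq(1)] .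
  have aM: "a \<in> sets M" using a sets_Sig_sub by auto
  have inc: "incseq (\<lambda>i \<omega>. indicator a \<omega> * U i \<omega>)"
    using \<open>incseq U\<close> by (auto simp: incseq_def le_fun_def intro!: mult_left_mono)
  have "(\<integral>\<^sup>+\<omega>. indicator a \<omega> * (SUP i. U i) \<omega> \<partial>M) = (\<integral>\<^sup>+\<omega>. (SUP i. indicator a \<omega> * U i \<omega>) \<partial>M)"
    by (simp add: SUP_mult_left_ennreal image_comp)
  also have "\<dots> = (SUP i. \<integral>\<^sup>+\<omega>. indicator a \<omega> * U i \<omega> \<partial>M)"
    using inc Um aM by (intro nn_integral_monotone_convergence_SUP) auto
  also have "\<dots> = (SUP i. emeasure M a * (\<integral>\<^sup>+\<omega>. U i \<omega> \<partial>M))"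
  proof -
    have "\<And>i. (\<integral>\<^sup>+\<omega>. indicator a \<omega> * U i \<omega> \<partial>M) = emeasure M a * (\<integral>\<^sup>+\<omega>. U i \<omega> \<partial>M)"
      using seq by blast
    then show ?thesis by simp
  qed
  also have "\<dots> = emeasure M a * (SUP i. (\<integral>\<^sup>+\<omega>. U i \<omega> \<partial>M))"
    by (simp add: SUP_mult_left_ennreal)
  also have "(SUP i. (\<integral>\<^sup>+\<omega>. U i \<omega> \<partial>M)) = (\<integral>\<^sup>+\<omega>. (SUP i. U i \<omega>) \<partial>M)"
    using \<open>incseq U\<close> Um by (intro nn_integral_monotone_convergence_SUP[symmetric]) auto
  finally show ?case by (simp add: image_comp)
qed

end

lemma sorted_take_le_sub:
  fixes ys :: "real list"
  assumes "sorted ys" "A \<subseteq># mset ys" "size A = k"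
  shows "sum_list (take k ys) \<le> sum_mset A"
  using assms
proof (induction ys arbitrary: A k)
  case Nil then show ?case by simp
next
  case (Cons y ys)
  show ?case
  proof (cases k)
    case 0 then show ?thesis using Cons by simp
  next
    case (Suc k')
    have sy: "sorted ys" and ge: "\<forall>x\<in>set ys. y \<le> x" using Cons.prems by auto
    show ?thesis
    proof (cases "y \<in># A")
      case True
      define A' where "A' = A - {#y#}"
      have A: "A = add_mset y A'" using True unfolding A'_def by simp
      have "A' \<subseteq># mset ys" using Cons.prems(2) A by (simp add: subset_mset.add_mono) 
      moreover have "size A' = k'" using Cons.prems(3) A Suc by simp
      ultimately have "sum_list (take k' ys) \<le> sum_mset A'" using Cons.IH sy by blast
      then show ?thesis using A Suc by simp
    next
      case False
      have sub: "A \<subseteq># mset ys" unfolding subseteq_mset_def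
      proof
        fix a
        have "count A a \<le> count (add_mset y (mset ys)) a" using Cons.prems(2)
          by (simp add: subseteq_mset_def)
        then show "count A a \<le> count (mset ys) a" using False
          by (cases "a = y") (auto simp: not_in_iff)
      qed
      have IH: "sum_list (take k ys) \<le> sum_mset A" using Cons.IH sy sub Cons.prems(3) by blast
      have kl: "k \<le> length ys" using size_mset_mono[OF sub] Cons.prems(3) by simp
      have "take k ys = take k' ys @ [ys ! k']" using kl Suc by (simp add: take_Suc_conv_app_nth)
      moreover have "y \<le> ys ! k'" using ge kl Suc by auto
      ultimately have "y + sum_list (take k' ys) \<le> sum_list (take k ys)" by simp
      then show ?thesis using IH Suc by simp
    qed
  qed
qed

lemma prefix_mono:
  fixes ys :: "real list"
  assumes "\<forall>x\<in>set ys. 0 \<le> x" "j \<le> k"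
  shows "sum_list (take j ys) \<le> sum_list (take k ys)"
proof -
  have "take k ys = take j ys @ take (k - j) (drop j ys)"
    using assms(2) by (metis le_add_diff_inverse take_add)
  moreover have "0 \<le> sum_list (take (k - j) (drop j ys))"
    using assms(1) by (intro sum_list_nonneg) (meson in_set_dropD in_set_takeD)
  ultimately show ?thesis by simp
qed

lemma wf_count_ge:
  assumes nn: "\<forall>x\<in>set xs. 0 \<le> x" and k: "1 \<le> k"
  shows "k \<le> wf_count xs s \<longleftrightarrow> k \<le> length xs \<and> sum_list (take k (sort xs)) \<le> s"
proof -
  have nns: "\<forall>x\<in>set (sort xs). 0 \<le> x" using nn by simp
  show ?thesis
  proof (cases "xs = []")
    case True then show ?thesis using k by (simp add: wf_count_def)
  next
    case ne: False
    then have sne: "sort xs \<noteq> []" by (metis length_0_conv length_sort)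
    have t1: "sum_list (take 1 (sort xs)) = hd (sort xs)" using sne
      by (cases "sort xs") auto
    show ?thesis
    proof (cases "hd (sort xs) > s")
      case True
      have "sum_list (take 1 (sort xs)) \<le> sum_list (take k (sort xs))"
        using prefix_mono[OF nns k] .
      then show ?thesis using True t1 ne k by (simp add: wf_count_def)
    next
      case False
      let ?P = "\<lambda>j. 1 \<le> j \<and> j \<le> length xs \<and> sum_list (take j (sort xs)) \<le> s"
      have wc: "wf_count xs s = (GREATEST j. ?P j)" using False ne by (simp add: wf_count_def)
      have P1: "?P 1" using False t1 ne by (simp add: Suc_leI)
      have bd: "\<forall>y. ?P y \<longrightarrow> y \<le> length xs" by simp
      have PG: "?P (GREATEST j. ?P j)" using GreatestI_nat[of ?P 1 "length xs"] P1 by blast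
      show ?thesis
      proof
        assume "k \<le> wf_count xs s"
        then have "k \<le> (GREATEST j. ?P j)" using wc by simp
        then show "k \<le> length xs \<and> sum_list (take k (sort xs)) \<le> s"
          using PG prefix_mono[OF nns, of k "GREATEST j. ?P j"] by linarith
      next
        assume "k \<le> length xs \<and> sum_list (take k (sort xs)) \<le> s"
        then have "?P k" using k by simp
        then show "k \<le> wf_count xs s" using wc Greatest_le_nat[of ?P k "length xs"] by simp
      qed
    qed
  qed
qed

lemma sub_index:
  fixes xs :: "'b list"
  assumes "A \<subseteq># mset xs"
  shows "\<exists>K\<subseteq>{..<length xs}. image_mset (nth xs) (mset_set K) = A"
  using assms
proof (induction xs arbitrary: A)
  case Nil then show ?case by simp
next
  case (Cons x xs)
  have inj: "inj_on Suc K" for K :: "nat set" by simp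
  have shift: "image_mset (nth (x # xs)) (mset_set (Suc ` K)) = image_mset (nth xs) (mset_set K)"
    if "finite K" for K
    using that by (simp add: image_mset_mset_set[OF inj, symmetric] multiset.map_comp comp_def)
  show ?case
  proof (cases "x \<in># A")
    case True
    define A' where "A' = A - {#x#}"
    have A: "A = add_mset x A'" using True unfolding A'_def by simp
    have "A' \<subseteq># mset xs" using Cons.prems A by simp
    then obtain K where K: "K \<subseteq> {..<length xs}" "image_mset (nth xs) (mset_set K) = A'"
      using Cons.IH by blast
    have fK: "finite K" using K(1) finite_subset by blast
    have "0 \<notin> Suc ` K" by auto
    then have "mset_set (insert 0 (Suc ` K)) = add_mset 0 (mset_set (Suc ` K))"
      using fK by simp
    then have "image_mset (nth (x # xs)) (mset_set (insert 0 (Suc ` K))) = A"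
      using shift[OF fK] K(2) A by simp
    moreover have "insert 0 (Suc ` K) \<subseteq> {..<length (x # xs)}" using K(1) by auto
    ultimately show ?thesis by blast
  next
    case False
    have sub: "A \<subseteq># mset xs" unfolding subseteq_mset_def
    proof
      fix a
      have "count A a \<le> count (add_mset x (mset xs)) a" using Cons.prems
        by (simp add: subseteq_mset_def)
      then show "count A a \<le> count (mset xs) a" using False
        by (cases "a = x") (auto simp: not_in_iff)
    qed
    then obtain K where K: "K \<subseteq> {..<length xs}" "image_mset (nth xs) (mset_set K) = A"
      using Cons.IH by blast
    have fK: "finite K" using K(1) finite_subset by blast
    have "image_mset (nth (x # xs)) (mset_set (Suc ` K)) = A" using shift[OF fK] K(2) by simp
    moreover have "Suc ` K \<subseteq> {..<length (x # xs)}" using K(1) by auto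
    ultimately show ?thesis by blast
  qed
qed

lemma sortsum_iff:
  fixes xs :: "real list"
  assumes "k \<le> length xs"
  shows "sum_list (take k (sort xs)) \<le> s \<longleftrightarrow>
    (\<exists>K\<subseteq>{..<length xs}. card K = k \<and> (\<Sum>i\<in>K. xs ! i) \<le> s)"
proof
  assume a: "sum_list (take k (sort xs)) \<le> s"
  have "mset (take k (sort xs)) \<subseteq># mset (sort xs)"
    by (metis append_take_drop_id mset_append mset_subset_eq_add_left)
  then have "mset (take k (sort xs)) \<subseteq># mset xs" by simp
  then obtain K where K: "K \<subseteq> {..<length xs}" "image_mset (nth xs) (mset_set K) = mset (take k (sort xs))"
    using sub_index by blast
  have fK: "finite K" using K(1) finite_subset by blast
  have "card K = size (image_mset (nth xs) (mset_set K))" using fK by simp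
  also have "\<dots> = k" using K(2) assms by simp
  finally have "card K = k" .
  moreover have "(\<Sum>i\<in>K. xs ! i) = sum_list (take k (sort xs))"
    unfolding sum_unfold_sum_mset K(2) by (simp add: sum_mset_sum_list)
  ultimately show "\<exists>K\<subseteq>{..<length xs}. card K = k \<and> (\<Sum>i\<in>K. xs ! i) \<le> s"
    using K(1) a by auto
next
  assume "\<exists>K\<subseteq>{..<length xs}. card K = k \<and> (\<Sum>i\<in>K. xs ! i) \<le> s"
  then obtain K where K: "K \<subseteq> {..<length xs}" "card K = k" "(\<Sum>i\<in>K. xs ! i) \<le> s" by blast
  have fK: "finite K" using K(1) finite_subset by blast
  have "mset xs = image_mset (nth xs) (mset_set {..<length xs})"
    by (metis map_nth mset_map mset_set_upto_eq_mset_upto)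
  then have sub: "image_mset (nth xs) (mset_set K) \<subseteq># mset (sort xs)"
    using K(1) fK by (simp add: image_mset_subseteq_mono)
  have "sum_list (take k (sort xs)) \<le> sum_mset (image_mset (nth xs) (mset_set K))"
    by (rule sorted_take_le_sub[OF sorted_sort sub]) (use fK K(2) in simp)
  then show "sum_list (take k (sort xs)) \<le> s" using K(3) by (simp add: sum_unfold_sum_mset)
qed

lemma sorted_avg:
  fixes ys :: "real list"
  assumes "sorted ys" "k \<le> length ys"
  shows "real (length ys) * sum_list (take k ys) \<le> real k * sum_list ys"
proof (cases "k < length ys")
  case False then have "k = length ys" using assms by simp
  then show ?thesis by simp
next
  case True
  define c where "c = ys ! k"
  define n where "n = length ys"
  have a: "sum_list (take k ys) = (\<Sum>i<k. ys ! i)"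
    using True by (simp add: sum_list_sum_nth lessThan_atLeast0 min_def)
  have b: "sum_list ys = (\<Sum>i<k. ys ! i) + (\<Sum>i\<in>{k..<n}. ys ! i)"
    unfolding n_def sum_list_sum_nth using True
    by (metis atLeast0LessThan less_imp_le_nat sum.atLeastLessThan_concat zero_le)
  have a1: "(\<Sum>i<k. ys ! i) \<le> real k * c"
  proof -
    have "(\<Sum>i<k. ys ! i) \<le> (\<Sum>i<k. c)"
      using assms(1) True unfolding c_def by (intro sum_mono sorted_nth_mono) auto
    then show ?thesis by simp
  qed
  have b1: "real (n - k) * c \<le> (\<Sum>i\<in>{k..<n}. ys ! i)"
  proof -
    have "(\<Sum>i\<in>{k..<n}. c) \<le> (\<Sum>i\<in>{k..<n}. ys ! i)"
      using assms(1) True unfolding c_def n_def by (intro sum_mono sorted_nth_mono) auto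
    then show ?thesis by simp
  qed
  have kn: "k \<le> n" using True n_def by simp
  have "real n * (\<Sum>i<k. ys ! i) = real k * (\<Sum>i<k. ys ! i) + real (n - k) * (\<Sum>i<k. ys ! i)"
    using kn by (simp add: of_nat_diff algebra_simps)
  also have "\<dots> \<le> real k * (\<Sum>i<k. ys ! i) + real (n - k) * (real k * c)"
    using a1 by (intro add_left_mono mult_left_mono) auto
  also have "\<dots> = real k * (\<Sum>i<k. ys ! i) + real k * (real (n - k) * c)" by simp
  also have "\<dots> \<le> real k * (\<Sum>i<k. ys ! i) + real k * (\<Sum>i\<in>{k..<n}. ys ! i)"
    using b1 by (intro add_left_mono mult_left_mono) auto
  finally show ?thesis unfolding a b n_def by (simp add: algebra_simps)
qed

lemma wf_count_lower:
  fixes xs :: "real list"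
  assumes nn: "\<forall>x\<in>set xs. 0 \<le> x" and k: "1 \<le> k" "k \<le> L" and L: "L \<le> length xs"
    and le: "real k * sum_list (take L xs) \<le> real L * s"
  shows "k \<le> wf_count xs s"
proof -
  define ys where "ys = sort (take L xs)"
  have ly: "length ys = L" using L unfolding ys_def by simp
  have "real L * sum_list (take k ys) \<le> real k * sum_list ys"
    using sorted_avg[of ys k] k ly unfolding ys_def by simp
  also have "\<dots> = real k * sum_list (take L xs)" unfolding ys_def
    by (simp add: sum_mset_sum_list[symmetric])
  also have "\<dots> \<le> real L * s" by (rule le)
  finally have "sum_list (take k ys) \<le> s" using k by simp
  moreover have "mset (take k ys) \<subseteq># mset (sort xs)"
  proof -
    have "mset (take k ys) \<subseteq># mset ys"
      by (metis append_take_drop_id mset_append mset_subset_eq_add_left)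
    also have "mset ys = mset (take L xs)" unfolding ys_def by simp
    also have "\<dots> \<subseteq># mset xs"
      by (metis append_take_drop_id mset_append mset_subset_eq_add_left)
    finally show ?thesis by simp
  qed
  then have "sum_list (take k (sort xs)) \<le> sum_mset (mset (take k ys))"
    using sorted_take_le_sub[OF sorted_sort] k ly by simp
  ultimately have "sum_list (take k (sort xs)) \<le> s" by (simp add: sum_mset_sum_list)
  then show ?thesis using wf_count_ge[OF nn k(1)] k L by simp
qed

lemma wf_count_upper:
  fixes xs :: "real list"
  assumes nn: "\<forall>x\<in>set xs. 0 \<le> x" and s: "0 \<le> s" and a: "0 < a"
  shows "real (wf_count xs s) \<le> a * s + sum_list (map (\<lambda>x. max 0 (1 - a * x)) xs)"
proof (cases "wf_count xs s = 0")
  case True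
  have "0 \<le> sum_list (map (\<lambda>x. max 0 (1 - a * x)) xs)" by (intro sum_list_nonneg) auto
  then show ?thesis using True s a by simp
next
  case False
  define k where "k = wf_count xs s"
  have k1: "1 \<le> k" using False k_def by simp
  have "k \<le> length xs \<and> sum_list (take k (sort xs)) \<le> s"
    using wf_count_ge[OF nn k1, of s, THEN iffD1] k_def by blast
  then have kl: "k \<le> length xs" and ks: "sum_list (take k (sort xs)) \<le> s" by auto
  let ?f = "\<lambda>x. max 0 (1 - a * x)"
  let ?t = "take k (sort xs)"
  have "real k = sum_list (map (\<lambda>x. 1::real) ?t)" using kl by (simp add: sum_list_triv)
  also have "\<dots> \<le> sum_list (map (\<lambda>x. a * x + ?f x) ?t)"
    by (intro sum_list_mono) auto
  also have "\<dots> = a * sum_list ?t + sum_list (map ?f ?t)"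
    by (simp add: sum_list_addf sum_list_const_mult)
  also have "\<dots> \<le> a * s + sum_list (map ?f (sort xs))"
  proof -
    have "sum_list (map ?f ?t) \<le> sum_list (map ?f (sort xs))"
    proof -
      have "sum_list (map ?f (sort xs)) = sum_list (map ?f ?t) + sum_list (map ?f (drop k (sort xs)))"
        by (metis append_take_drop_id map_append sum_list_append)
      moreover have "0 \<le> sum_list (map ?f (drop k (sort xs)))" by (intro sum_list_nonneg) auto
      ultimately show ?thesis by simp
    qed
    then show ?thesis using ks a by (intro add_mono mult_left_mono) auto
  qed
  also have "sum_list (map ?f (sort xs)) = sum_list (map ?f xs)"
  proof -
    have "mset (map ?f (sort xs)) = mset (map ?f xs)" by simp
    then have "sum_mset (mset (map ?f (sort xs))) = sum_mset (mset (map ?f xs))" by simp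
    then show ?thesis by (simp only: sum_mset_sum_list)
  qed
  finally show ?thesis unfolding k_def .
qed


definition G :: "(nat \<Rightarrow> nat \<Rightarrow> 'a \<Rightarrow> nat) \<Rightarrow> (nat \<Rightarrow> nat \<Rightarrow> 'a \<Rightarrow> real) \<Rightarrow>
    (nat \<Rightarrow> nat \<Rightarrow> 'a \<Rightarrow> real) \<Rightarrow> nat \<Rightarrow> nat \<Rightarrow> 'a \<Rightarrow> nat" where
  "G D X R n w \<omega> = wf_count (map (\<lambda>k. X n k \<omega>) [1..<(\<Sum>j=1..w. D n j \<omega>)+1]) (\<Sum>j=1..w. R n j \<omega>)"

lemma wf_proc_Suc': "wf_proc D X R (Suc n) \<omega> = G D X R n (wf_proc D X R n \<omega>) \<omega>"
  by (simp add: G_def Let_def)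

lemma G_ge:
  assumes nn: "\<forall>k. 0 \<le> X n k \<omega>" and k: "1 \<le> k"
  shows "k \<le> G D X R n w \<omega> \<longleftrightarrow>
    (\<exists>d. (\<Sum>j=1..w. D n j \<omega>) = d \<and> k \<le> d \<and>
      (\<exists>K\<in>{K. K \<subseteq> {..<d} \<and> card K = k}. (\<Sum>i\<in>K. X n (Suc i) \<omega>) \<le> (\<Sum>j=1..w. R n j \<omega>)))"
proof -
  define d where "d = (\<Sum>j=1..w. D n j \<omega>)"
  define xs where "xs = map (\<lambda>k. X n k \<omega>) [1..<d+1]"
  have lx: "length xs = d" unfolding xs_def by simp
  have nx: "\<And>i. i < d \<Longrightarrow> xs ! i = X n (Suc i) \<omega>" unfolding xs_def by (simp del: upt_Suc)
  have nnx: "\<forall>x\<in>set xs. 0 \<le> x" unfolding xs_def using nn by auto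
  have "k \<le> G D X R n w \<omega> \<longleftrightarrow> k \<le> length xs \<and> sum_list (take k (sort xs)) \<le> (\<Sum>j=1..w. R n j \<omega>)"
    unfolding G_def d_def[symmetric] xs_def[symmetric] using wf_count_ge[OF nnx k] by simp
  also have "\<dots> \<longleftrightarrow> k \<le> d \<and> (\<exists>K\<subseteq>{..<d}. card K = k \<and> (\<Sum>i\<in>K. xs ! i) \<le> (\<Sum>j=1..w. R n j \<omega>))"
    using sortsum_iff[of k xs] lx by auto
  also have "\<dots> \<longleftrightarrow> k \<le> d \<and> (\<exists>K\<subseteq>{..<d}. card K = k \<and> (\<Sum>i\<in>K. X n (Suc i) \<omega>) \<le> (\<Sum>j=1..w. R n j \<omega>))"
  proof -
    have "\<And>K. K \<subseteq> {..<d} \<Longrightarrow> (\<Sum>i\<in>K. xs ! i) = (\<Sum>i\<in>K. X n (Suc i) \<omega>)"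
      using nx by (intro sum.cong) auto
    then show ?thesis by (metis (no_types, lifting))
  qed
  finally show ?thesis unfolding d_def by auto
qed

lemma G_meas:
  assumes Dm: "\<And>k. 1 \<le> k \<Longrightarrow> (\<lambda>\<omega>. real (D n k \<omega>)) \<in> borel_measurable N"
    and Xm: "\<And>k. 1 \<le> k \<Longrightarrow> X n k \<in> borel_measurable N"
    and Rm: "\<And>k. 1 \<le> k \<Longrightarrow> R n k \<in> borel_measurable N"
    and nn: "\<And>\<omega> k. \<omega> \<in> space N \<Longrightarrow> 0 \<le> X n k \<omega>"
  shows "G D X R n w \<in> measurable N (count_space UNIV)"
proof -
  have Dsum: "(\<lambda>\<omega>. real (\<Sum>j=1..w. D n j \<omega>)) \<in> borel_measurable N"
    using Dm by (simp add: borel_measurable_sum)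
  have Rsum: "(\<lambda>\<omega>. (\<Sum>j=1..w. R n j \<omega>)) \<in> borel_measurable N"
    using Rm by (simp add: borel_measurable_sum)
  have ge: "{\<omega>\<in>space N. k \<le> G D X R n w \<omega>} \<in> sets N" for k
  proof (cases "k = 0")
    case True then show ?thesis by simp
  next
    case False
    then have k: "1 \<le> k" by simp
    have eq: "{\<omega>\<in>space N. k \<le> G D X R n w \<omega>} = {\<omega>\<in>space N. \<exists>d::nat. real (\<Sum>j=1..w. D n j \<omega>) = real d \<and> k \<le> d \<and>
      (\<exists>K\<in>{K. K \<subseteq> {..<d} \<and> card K = k}. (\<Sum>i\<in>K. X n (Suc i) \<omega>) \<le> (\<Sum>j=1..w. R n j \<omega>))}"
    proof (intro Collect_cong conj_cong refl)
      fix \<omega> assume "\<omega> \<in> space N"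
      then have "\<forall>k. 0 \<le> X n k \<omega>" using nn by blast
      from G_ge[where X=X and n=n and \<omega>=\<omega>, OF this k, of D R w] show "(k \<le> G D X R n w \<omega>) = (\<exists>d::nat. real (\<Sum>j=1..w. D n j \<omega>) = real d \<and> k \<le> d \<and>
      (\<exists>K\<in>{K. K \<subseteq> {..<d} \<and> card K = k}. (\<Sum>i\<in>K. X n (Suc i) \<omega>) \<le> (\<Sum>j=1..w. R n j \<omega>)))"
        by (simp only: of_nat_eq_iff)
    qed
    have "Measurable.pred N (\<lambda>\<omega>. \<exists>d::nat. real (\<Sum>j=1..w. D n j \<omega>) = real d \<and> k \<le> d \<and>
      (\<exists>K\<in>{K. K \<subseteq> {..<d} \<and> card K = k}. (\<Sum>i\<in>K. X n (Suc i) \<omega>) \<le> (\<Sum>j=1..w. R n j \<omega>)))"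
    proof (intro pred_intros_countable pred_intros_logic)
      fix d :: nat
      show "Measurable.pred N (\<lambda>\<omega>. real (\<Sum>j=1..w. D n j \<omega>) = real d)"
      proof -
        have "(\<lambda>\<omega>. real (\<Sum>j=1..w. D n j \<omega>)) -` {real d} \<inter> space N \<in> sets N"
          using Dsum by (rule measurable_sets) simp
        then show ?thesis unfolding pred_def
          by (simp add: vimage_def Int_def conj_commute del: of_nat_sum)
      qed
      show "Measurable.pred N (\<lambda>\<omega>. k \<le> d)" by simp
      show "Measurable.pred N (\<lambda>\<omega>. \<exists>K\<in>{K. K \<subseteq> {..<d} \<and> card K = k}. (\<Sum>i\<in>K. X n (Suc i) \<omega>) \<le> (\<Sum>j=1..w. R n j \<omega>))"
      proof (intro pred_intros_finite)
        show "finite {K. K \<subseteq> {..<d} \<and> card K = k}" by simp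
        fix K assume "K \<in> {K. K \<subseteq> {..<d} \<and> card K = k}"
        have "(\<lambda>\<omega>. \<Sum>i\<in>K. X n (Suc i) \<omega>) \<in> borel_measurable N"
          using Xm by (intro borel_measurable_sum) auto
        then show "Measurable.pred N (\<lambda>\<omega>. (\<Sum>i\<in>K. X n (Suc i) \<omega>) \<le> (\<Sum>j=1..w. R n j \<omega>))"
          using Rsum by measurable
      qed
    qed
    then show ?thesis unfolding eq by (simp add: pred_def)
  qed
  show ?thesis
  proof (subst measurable_count_space_eq2_countable, safe)
    fix j :: nat
    have "G D X R n w -` {j} \<inter> space N = {\<omega>\<in>space N. j \<le> G D X R n w \<omega>} - {\<omega>\<in>space N. Suc j \<le> G D X R n w \<omega>}"
      by auto
    then show "G D X R n w -` {j} \<inter> space N \<in> sets N" using ge by simp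
  qed auto
qed

lemma wf_proc_meas:
  assumes Dm: "\<And>j k. j < n \<Longrightarrow> 1 \<le> k \<Longrightarrow> (\<lambda>\<omega>. real (D j k \<omega>)) \<in> borel_measurable N"
    and Xm: "\<And>j k. j < n \<Longrightarrow> 1 \<le> k \<Longrightarrow> X j k \<in> borel_measurable N"
    and Rm: "\<And>j k. j < n \<Longrightarrow> 1 \<le> k \<Longrightarrow> R j k \<in> borel_measurable N"
    and nn: "\<And>\<omega> j k. \<omega> \<in> space N \<Longrightarrow> 0 \<le> X j k \<omega>"
  shows "wf_proc D X R n \<in> measurable N (count_space UNIV)"
  using assms
proof (induction n)
  case 0 then show ?case by simp
next
  case (Suc n)
  have IH: "wf_proc D X R n \<in> measurable N (count_space UNIV)"
    using Suc.IH Suc.prems by simp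
  have "(\<lambda>\<omega>. G D X R n (wf_proc D X R n \<omega>) \<omega>) \<in> measurable N (count_space UNIV)"
    by (rule measurable_compose_countable[OF G_meas IH]) (use Suc.prems in auto)
  then show ?case unfolding wf_proc_Suc'[abs_def] .
qed


fun row :: "(nat \<times> nat) + (nat \<times> nat) + (nat \<times> nat) \<Rightarrow> nat" where
  "row (Inl (n, k)) = n" | "row (Inr (Inl (n, k))) = n" | "row (Inr (Inr (n, k))) = n"

definition Past :: "nat \<Rightarrow> ((nat \<times> nat) + (nat \<times> nat) + (nat \<times> nat)) set" where
  "Past n = {i\<in>wf_index. row i < n}"
definition Row :: "nat \<Rightarrow> ((nat \<times> nat) + (nat \<times> nat) + (nat \<times> nat)) set" where
  "Row n = {i\<in>wf_index. row i = n}"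

lemma Past_Row_disj: "Past n \<inter> Row n = {}" by (auto simp: Past_def Row_def)

locale wfp = wfs +
  assumes X_nonneg: "\<And>n k \<omega>. \<omega> \<in> space M \<Longrightarrow> X n k \<omega> \<ge> 0"
    and R_nonneg: "\<And>n k \<omega>. \<omega> \<in> space M \<Longrightarrow> R n k \<omega> \<ge> 0"
    and D_id: "\<And>n k. 1 \<le> k \<Longrightarrow> distr M (count_space UNIV) (D n k) = distr M (count_space UNIV) (D 0 1)"
    and X_id: "\<And>n k. 1 \<le> k \<Longrightarrow> distr M borel (X n k) = distr M borel (X 0 1)"
    and R_id: "\<And>n k. 1 \<le> k \<Longrightarrow> distr M borel (R n k) = distr M borel (R 0 1)"
    and D_sq: "integrable M (\<lambda>\<omega>. (real (D 0 1 \<omega>))\<^sup>2)"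
    and X_sq: "integrable M (\<lambda>\<omega>. (X 0 1 \<omega>)\<^sup>2)"
    and R_sq: "integrable M (\<lambda>\<omega>. (R 0 1 \<omega>)\<^sup>2)"
    and D_int: "integrable M (\<lambda>\<omega>. real (D 0 1 \<omega>))"
    and X_int: "integrable M (X 0 1)"
    and R_int: "integrable M (R 0 1)"
begin

abbreviation "W \<equiv> wf_proc D X R"

lemma Fam_D: "Fam (Inl (n, k)) = (\<lambda>\<omega>. real (D n k \<omega>))" by (simp add: wf_family_def)
lemma Fam_X: "Fam (Inr (Inl (n, k))) = X n k" by (simp add: wf_family_def)
lemma Fam_R: "Fam (Inr (Inr (n, k))) = R n k" by (simp add: wf_family_def)

lemma W_meas_Sig:
  assumes "m \<le> n" shows "W m \<in> measurable (Sig (Past n)) (count_space UNIV)"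
proof (rule wf_proc_meas)
  fix j k :: nat assume "j < m" "1 \<le> k"
  then have "Inl (j, k) \<in> Past n" "Inr (Inl (j, k)) \<in> Past n" "Inr (Inr (j, k)) \<in> Past n"
    using assms by (auto simp: Past_def wf_index_def)
  then show "(\<lambda>\<omega>. real (D j k \<omega>)) \<in> borel_measurable (Sig (Past n))"
    "X j k \<in> borel_measurable (Sig (Past n))" "R j k \<in> borel_measurable (Sig (Past n))"
    using Fam_Sig Fam_D Fam_X Fam_R by metis+
qed (use X_nonneg in auto)

lemma G_meas_Sig: "G D X R n w \<in> measurable (Sig (Row n)) (count_space UNIV)"
proof (rule G_meas)
  fix k :: nat assume "1 \<le> k"
  then have "Inl (n, k) \<in> Row n" "Inr (Inl (n, k)) \<in> Row n" "Inr (Inr (n, k)) \<in> Row n"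
    by (auto simp: Row_def wf_index_def)
  then show "(\<lambda>\<omega>. real (D n k \<omega>)) \<in> borel_measurable (Sig (Row n))"
    "X n k \<in> borel_measurable (Sig (Row n))" "R n k \<in> borel_measurable (Sig (Row n))"
    using Fam_Sig Fam_D Fam_X Fam_R by metis+
qed (use X_nonneg in auto)

lemma W_meas[measurable]: "W n \<in> measurable M (count_space UNIV)"
  using measurable_from_subalg[OF subalg_Sig W_meas_Sig[OF order_refl]] .

lemma G_meas_M[measurable]: "G D X R n w \<in> measurable M (count_space UNIV)"
  using measurable_from_subalg[OF subalg_Sig G_meas_Sig] .

lemma Past_sub: "Past n \<subseteq> wf_index" and Row_sub: "Row n \<subseteq> wf_index"
  by (auto simp: Past_def Row_def)

lemma D_moment:
  fixes g :: "nat \<Rightarrow> real" and h :: "nat \<Rightarrow> ennreal"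
  assumes "1 \<le> k"
  shows "(\<integral>\<omega>. g (D n k \<omega>) \<partial>M) = (\<integral>\<omega>. g (D 0 1 \<omega>) \<partial>M)"
    and "integrable M (\<lambda>\<omega>. g (D n k \<omega>)) \<longleftrightarrow> integrable M (\<lambda>\<omega>. g (D 0 1 \<omega>))"
    and "(\<integral>\<^sup>+\<omega>. h (D n k \<omega>) \<partial>M) = (\<integral>\<^sup>+\<omega>. h (D 0 1 \<omega>) \<partial>M)"
proof -
  show "(\<integral>\<omega>. g (D n k \<omega>) \<partial>M) = (\<integral>\<omega>. g (D 0 1 \<omega>) \<partial>M)"
    using integral_distr[OF D_meas, of g n k] integral_distr[OF D_meas, of g 0 1] D_id[OF assms, of n]
    by simp
  show "integrable M (\<lambda>\<omega>. g (D n k \<omega>)) \<longleftrightarrow> integrable M (\<lambda>\<omega>. g (D 0 1 \<omega>))"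
    using integrable_distr_eq[OF D_meas, of g n k] integrable_distr_eq[OF D_meas, of g 0 1] D_id[OF assms, of n]
    by simp
  show "(\<integral>\<^sup>+\<omega>. h (D n k \<omega>) \<partial>M) = (\<integral>\<^sup>+\<omega>. h (D 0 1 \<omega>) \<partial>M)"
    using nn_integral_distr[OF D_meas, of h n k] nn_integral_distr[OF D_meas, of h 0 1] D_id[OF assms, of n]
    by simp
qed

lemma X_moment:
  fixes g :: "real \<Rightarrow> real" and h :: "real \<Rightarrow> ennreal"
  assumes "1 \<le> k" and g: "g \<in> borel_measurable borel" and h: "h \<in> borel_measurable borel"
  shows "(\<integral>\<omega>. g (X n k \<omega>) \<partial>M) = (\<integral>\<omega>. g (X 0 1 \<omega>) \<partial>M)"
    and "integrable M (\<lambda>\<omega>. g (X n k \<omega>)) \<longleftrightarrow> integrable M (\<lambda>\<omega>. g (X 0 1 \<omega>))"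
    and "(\<integral>\<^sup>+\<omega>. h (X n k \<omega>) \<partial>M) = (\<integral>\<^sup>+\<omega>. h (X 0 1 \<omega>) \<partial>M)"
proof -
  show "(\<integral>\<omega>. g (X n k \<omega>) \<partial>M) = (\<integral>\<omega>. g (X 0 1 \<omega>) \<partial>M)"
    using integral_distr[OF X_meas g, of n k] integral_distr[OF X_meas g, of 0 1] X_id[OF assms(1), of n]
    by simp
  show "integrable M (\<lambda>\<omega>. g (X n k \<omega>)) \<longleftrightarrow> integrable M (\<lambda>\<omega>. g (X 0 1 \<omega>))"
    using integrable_distr_eq[OF X_meas g, of n k] integrable_distr_eq[OF X_meas g, of 0 1] X_id[OF assms(1), of n]
    by simp
  show "(\<integral>\<^sup>+\<omega>. h (X n k \<omega>) \<partial>M) = (\<integral>\<^sup>+\<omega>. h (X 0 1 \<omega>) \<partial>M)"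
    using nn_integral_distr[OF X_meas, of h n k] nn_integral_distr[OF X_meas, of h 0 1] X_id[OF assms(1), of n] h
    by simp
qed

lemma R_moment:
  fixes g :: "real \<Rightarrow> real" and h :: "real \<Rightarrow> ennreal"
  assumes "1 \<le> k" and g: "g \<in> borel_measurable borel" and h: "h \<in> borel_measurable borel"
  shows "(\<integral>\<omega>. g (R n k \<omega>) \<partial>M) = (\<integral>\<omega>. g (R 0 1 \<omega>) \<partial>M)"
    and "integrable M (\<lambda>\<omega>. g (R n k \<omega>)) \<longleftrightarrow> integrable M (\<lambda>\<omega>. g (R 0 1 \<omega>))"
    and "(\<integral>\<^sup>+\<omega>. h (R n k \<omega>) \<partial>M) = (\<integral>\<^sup>+\<omega>. h (R 0 1 \<omega>) \<partial>M)"
proof -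
  show "(\<integral>\<omega>. g (R n k \<omega>) \<partial>M) = (\<integral>\<omega>. g (R 0 1 \<omega>) \<partial>M)"
    using integral_distr[OF R_meas g, of n k] integral_distr[OF R_meas g, of 0 1] R_id[OF assms(1), of n]
    by simp
  show "integrable M (\<lambda>\<omega>. g (R n k \<omega>)) \<longleftrightarrow> integrable M (\<lambda>\<omega>. g (R 0 1 \<omega>))"
    using integrable_distr_eq[OF R_meas g, of n k] integrable_distr_eq[OF R_meas g, of 0 1] R_id[OF assms(1), of n]
    by simp
  show "(\<integral>\<^sup>+\<omega>. h (R n k \<omega>) \<partial>M) = (\<integral>\<^sup>+\<omega>. h (R 0 1 \<omega>) \<partial>M)"
    using nn_integral_distr[OF R_meas, of h n k] nn_integral_distr[OF R_meas, of h 0 1] R_id[OF assms(1), of n] h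
    by simp
qed

lemma W_absorb: "W n \<omega> = 0 \<Longrightarrow> W (n + j) \<omega> = 0"
proof (induction j)
  case 0 then show ?case by simp
next
  case (Suc j)
  then show ?case by (simp add: Let_def wf_count_def)
qed

lemma W_tendsto_iff: "(\<lambda>n. W n \<omega>) \<longlonglongrightarrow> 0 \<longleftrightarrow> (\<exists>n. W n \<omega> = 0)"
proof
  assume "(\<lambda>n. W n \<omega>) \<longlonglongrightarrow> 0"
  then have "eventually (\<lambda>n. W n \<omega> = 0) sequentially"
    by (simp add: tendsto_discrete)
  then show "\<exists>n. W n \<omega> = 0"
    unfolding eventually_sequentially by blast
next
  assume "\<exists>n. W n \<omega> = 0"
  then obtain n where n: "W n \<omega> = 0" by blast
  have "\<forall>j\<ge>n. W j \<omega> = 0" using W_absorb[OF n] by (metis le_add_diff_inverse)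
  then show "(\<lambda>n. W n \<omega>) \<longlonglongrightarrow> 0"
    by (intro tendsto_eventually) (auto simp: eventually_sequentially)
qed

lemma qW_set: "{\<omega>\<in>space M. (\<lambda>n. W n \<omega>) \<longlonglongrightarrow> 0} = (\<Union>n. {\<omega>\<in>space M. W n \<omega> = 0})"
  using W_tendsto_iff by auto

lemma qW_set_meas: "{\<omega>\<in>space M. (\<lambda>n. W n \<omega>) \<longlonglongrightarrow> 0} \<in> events"
  unfolding qW_set by measurable

end

context wfp begin

lemma decomp:
  fixes F :: "nat \<Rightarrow> 'a \<Rightarrow> ennreal"
  assumes V: "V \<in> measurable M (count_space UNIV)" and Fm: "\<And>w. F w \<in> borel_measurable M"
  shows "(\<integral>\<^sup>+\<omega>. F (V \<omega>) \<omega> \<partial>M) = (\<Sum>w. \<integral>\<^sup>+\<omega>. indicator {\<omega>\<in>space M. V \<omega> = w} \<omega> * F w \<omega> \<partial>M)"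
proof -
  have "(\<integral>\<^sup>+\<omega>. F (V \<omega>) \<omega> \<partial>M) = (\<integral>\<^sup>+\<omega>. (\<Sum>w. indicator {\<omega>\<in>space M. V \<omega> = w} \<omega> * F w \<omega>) \<partial>M)"
  proof (rule nn_integral_cong)
    fix \<omega> assume \<omega>: "\<omega> \<in> space M"
    have "(\<lambda>w. indicator {\<omega>\<in>space M. V \<omega> = w} \<omega> * F w \<omega>) = (\<lambda>w. if w = V \<omega> then F w \<omega> else 0)"
      using \<omega> by (auto simp: indicator_def)
    then show "F (V \<omega>) \<omega> = (\<Sum>w. indicator {\<omega>\<in>space M. V \<omega> = w} \<omega> * F w \<omega>)"
      using sums_single[of "V \<omega>" "\<lambda>w. F w \<omega>", THEN sums_unique] by simp
  qed
  also have "\<dots> = (\<Sum>w. \<integral>\<^sup>+\<omega>. indicator {\<omega>\<in>space M. V \<omega> = w} \<omega> * F w \<omega> \<partial>M)"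
  proof (rule nn_integral_suminf)
    fix w
    have "{\<omega>\<in>space M. V \<omega> = w} \<in> sets M" using V by measurable
    then show "(\<lambda>\<omega>. indicator {\<omega>\<in>space M. V \<omega> = w} \<omega> * F w \<omega>) \<in> borel_measurable M"
      using Fm by measurable
  qed
  finally show ?thesis .
qed

lemma W_set_Sig: "{\<omega>\<in>space M. W n \<omega> = w} \<in> sets (Sig (Past n))"
proof -
  have "W n -` {w} \<inter> space (Sig (Past n)) \<in> sets (Sig (Past n))"
    by (rule measurable_sets[OF W_meas_Sig]) auto
  then show ?thesis by (simp add: vimage_def Int_def conj_commute)
qed

lemma EW_Suc:
  "(\<integral>\<^sup>+\<omega>. of_nat (W (Suc n) \<omega>) \<partial>M) =
   (\<Sum>w. emeasure M {\<omega>\<in>space M. W n \<omega> = w} * (\<integral>\<^sup>+\<omega>. of_nat (G D X R n w \<omega>) \<partial>M))"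
proof -
  have "(\<integral>\<^sup>+\<omega>. of_nat (W (Suc n) \<omega>) \<partial>M) = (\<integral>\<^sup>+\<omega>. of_nat (G D X R n (W n \<omega>) \<omega>) \<partial>M)"
    by (simp only: wf_proc_Suc')
  also have "\<dots> = (\<Sum>w. \<integral>\<^sup>+\<omega>. indicator {\<omega>\<in>space M. W n \<omega> = w} \<omega> * of_nat (G D X R n w \<omega>) \<partial>M)"
    using decomp[of "W n" "\<lambda>w \<omega>. of_nat (G D X R n w \<omega>)"] by simp
  also have "\<dots> = (\<Sum>w. emeasure M {\<omega>\<in>space M. W n \<omega> = w} * (\<integral>\<^sup>+\<omega>. of_nat (G D X R n w \<omega>) \<partial>M))"
  proof (rule suminf_cong)
    fix w
    have g: "(\<lambda>\<omega>. of_nat (G D X R n w \<omega>) :: ennreal) \<in> borel_measurable (Sig (Row n))"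
      using G_meas_Sig by measurable
    show "(\<integral>\<^sup>+\<omega>. indicator {\<omega>\<in>space M. W n \<omega> = w} \<omega> * of_nat (G D X R n w \<omega>) \<partial>M) =
      emeasure M {\<omega>\<in>space M. W n \<omega> = w} * (\<integral>\<^sup>+\<omega>. of_nat (G D X R n w \<omega>) \<partial>M)"
      by (rule indep_nn[OF Past_Row_disj Past_sub Row_sub W_set_Sig g])
  qed
  finally show ?thesis .
qed

lemma EW:
  "(\<integral>\<^sup>+\<omega>. of_nat (W n \<omega>) \<partial>M) = (\<Sum>w. emeasure M {\<omega>\<in>space M. W n \<omega> = w} * of_nat w)"
proof -
  have "(\<integral>\<^sup>+\<omega>. of_nat (W n \<omega>) \<partial>M) = (\<Sum>w. \<integral>\<^sup>+\<omega>. indicator {\<omega>\<in>space M. W n \<omega> = w} \<omega> * of_nat w \<partial>M)"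
    using decomp[of "W n" "\<lambda>w \<omega>. of_nat w"] by simp
  also have "\<dots> = (\<Sum>w. emeasure M {\<omega>\<in>space M. W n \<omega> = w} * of_nat w)"
  proof (rule suminf_cong)
    fix w
    have "{\<omega>\<in>space M. W n \<omega> = w} \<in> sets M" by measurable
    then show "(\<integral>\<^sup>+\<omega>. indicator {\<omega>\<in>space M. W n \<omega> = w} \<omega> * of_nat w \<partial>M) =
      emeasure M {\<omega>\<in>space M. W n \<omega> = w} * of_nat w"
      by (simp add: nn_integral_multc)
  qed
  finally show ?thesis .
qed

lemma tail_sum:
  assumes V: "V \<in> measurable M (count_space UNIV)"
  shows "(\<integral>\<^sup>+\<omega>. of_nat (V \<omega>) \<partial>M) = (\<Sum>i. emeasure M {\<omega>\<in>space M. Suc i \<le> V \<omega>})"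
proof -
  have "(\<integral>\<^sup>+\<omega>. of_nat (V \<omega>) \<partial>M) = (\<integral>\<^sup>+\<omega>. (\<Sum>i. indicator {\<omega>\<in>space M. Suc i \<le> V \<omega>} \<omega>) \<partial>M)"
  proof (rule nn_integral_cong)
    fix \<omega> assume \<omega>: "\<omega> \<in> space M"
    have "(\<Sum>i. indicator {\<omega>\<in>space M. Suc i \<le> V \<omega>} \<omega> :: ennreal) =
      (\<Sum>i<V \<omega>. indicator {\<omega>\<in>space M. Suc i \<le> V \<omega>} \<omega>)"
      by (rule suminf_finite) (auto simp: indicator_def)
    also have "\<dots> = (\<Sum>i<V \<omega>. 1)" using \<omega> by (intro sum.cong) (auto simp: indicator_def)
    finally show "of_nat (V \<omega>) = (\<Sum>i. indicator {\<omega>\<in>space M. Suc i \<le> V \<omega>} \<omega> :: ennreal)" by simp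
  qed
  also have "\<dots> = (\<Sum>i. emeasure M {\<omega>\<in>space M. Suc i \<le> V \<omega>})"
  proof -
    have m: "\<And>i. {\<omega>\<in>space M. Suc i \<le> V \<omega>} \<in> sets M" using V by measurable
    show ?thesis by (subst nn_integral_suminf) (use m in auto)
  qed
  finally show ?thesis .
qed

definition DRow :: "nat \<Rightarrow> ((nat \<times> nat) + (nat \<times> nat) + (nat \<times> nat)) set" where
  "DRow n = {Inl (n, k) | k. 1 \<le> k}"

lemma Dsum_Sig: "(\<lambda>\<omega>. \<Sum>j=1..w. D n j \<omega>) \<in> measurable (Sig (DRow n)) (count_space UNIV)"
proof -
  have "\<And>j. j \<in> {1..w} \<Longrightarrow> (\<lambda>\<omega>. real (D n j \<omega>)) \<in> borel_measurable (Sig (DRow n))"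
    using Fam_Sig[of "Inl (n, _)" "DRow n"] by (auto simp: DRow_def Fam_D)
  then have r: "(\<lambda>\<omega>. real (\<Sum>j=1..w. D n j \<omega>)) \<in> borel_measurable (Sig (DRow n))"
    by (simp add: borel_measurable_sum)
  show ?thesis
  proof (subst measurable_count_space_eq2_countable, safe)
    fix d :: nat
    have "(\<lambda>\<omega>. real (\<Sum>j=1..w. D n j \<omega>)) -` {real d} \<inter> space (Sig (DRow n)) \<in> sets (Sig (DRow n))"
      using r by (rule measurable_sets) simp
    then show "(\<lambda>\<omega>. \<Sum>j=1..w. D n j \<omega>) -` {d} \<inter> space (Sig (DRow n)) \<in> sets (Sig (DRow n))"
      by (simp add: vimage_def del: of_nat_sum)
  qed auto
qed

lemma Esum_h:
  fixes h :: "real \<Rightarrow> real"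
  assumes h: "h \<in> borel_measurable borel" "\<And>x. 0 \<le> h x"
  shows "(\<integral>\<^sup>+\<omega>. (\<Sum>i<(\<Sum>j=1..w. D n j \<omega>). ennreal (h (X n (Suc i) \<omega>))) \<partial>M) =
    (\<integral>\<^sup>+\<omega>. of_nat (\<Sum>j=1..w. D n j \<omega>) \<partial>M) * (\<integral>\<^sup>+\<omega>. ennreal (h (X 0 1 \<omega>)) \<partial>M)"
proof -
  define d where "d = (\<lambda>\<omega>. \<Sum>j=1..w. D n j \<omega>)"
  have dS: "d \<in> measurable (Sig (DRow n)) (count_space UNIV)" unfolding d_def by (rule Dsum_Sig)
  have dM: "d \<in> measurable M (count_space UNIV)" using measurable_from_subalg[OF subalg_Sig dS] .
  have set_S: "{\<omega>\<in>space M. Suc i \<le> d \<omega>} \<in> sets (Sig (DRow n))" for i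
  proof -
    have "{\<omega>\<in>space (Sig (DRow n)). Suc i \<le> d \<omega>} \<in> sets (Sig (DRow n))" using dS by measurable
    then show ?thesis by simp
  qed
  have XS: "(\<lambda>\<omega>. ennreal (h (X n (Suc i) \<omega>))) \<in> borel_measurable (Sig {Inr (Inl (n, Suc i))})" for i
  proof -
    have "X n (Suc i) \<in> borel_measurable (Sig {Inr (Inl (n, Suc i))})"
      using Fam_Sig[of "Inr (Inl (n, Suc i))"] by (simp add: Fam_X)
    then show ?thesis using h(1) by measurable
  qed
  have disj: "DRow n \<inter> {Inr (Inl (n, Suc i))} = {}" for i by (auto simp: DRow_def)
  have sub1: "DRow n \<subseteq> wf_index" and sub2: "{Inr (Inl (n, Suc i))} \<subseteq> wf_index" for i
    by (auto simp: DRow_def wf_index_def)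
  have "(\<integral>\<^sup>+\<omega>. (\<Sum>i<d \<omega>. ennreal (h (X n (Suc i) \<omega>))) \<partial>M) =
    (\<integral>\<^sup>+\<omega>. (\<Sum>i. indicator {\<omega>\<in>space M. Suc i \<le> d \<omega>} \<omega> * ennreal (h (X n (Suc i) \<omega>))) \<partial>M)"
  proof (rule nn_integral_cong)
    fix \<omega> assume \<omega>: "\<omega> \<in> space M"
    have "(\<Sum>i. indicator {\<omega>\<in>space M. Suc i \<le> d \<omega>} \<omega> * ennreal (h (X n (Suc i) \<omega>))) =
      (\<Sum>i<d \<omega>. indicator {\<omega>\<in>space M. Suc i \<le> d \<omega>} \<omega> * ennreal (h (X n (Suc i) \<omega>)))"
      by (rule suminf_finite) (auto simp: indicator_def)
    also have "\<dots> = (\<Sum>i<d \<omega>. ennreal (h (X n (Suc i) \<omega>)))"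
      using \<omega> by (intro sum.cong) (auto simp: indicator_def)
    finally show "(\<Sum>i<d \<omega>. ennreal (h (X n (Suc i) \<omega>))) =
      (\<Sum>i. indicator {\<omega>\<in>space M. Suc i \<le> d \<omega>} \<omega> * ennreal (h (X n (Suc i) \<omega>)))" by simp
  qed
  also have "\<dots> = (\<Sum>i. \<integral>\<^sup>+\<omega>. indicator {\<omega>\<in>space M. Suc i \<le> d \<omega>} \<omega> * ennreal (h (X n (Suc i) \<omega>)) \<partial>M)"
  proof (rule nn_integral_suminf)
    fix i
    have "{\<omega>\<in>space M. Suc i \<le> d \<omega>} \<in> sets M" using dM by measurable
    moreover have "(\<lambda>\<omega>. ennreal (h (X n (Suc i) \<omega>))) \<in> borel_measurable M"
      using measurable_from_subalg[OF subalg_Sig XS] .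
    ultimately show "(\<lambda>\<omega>. indicator {\<omega>\<in>space M. Suc i \<le> d \<omega>} \<omega> * ennreal (h (X n (Suc i) \<omega>))) \<in> borel_measurable M"
      by measurable
  qed
  also have "\<dots> = (\<Sum>i. emeasure M {\<omega>\<in>space M. Suc i \<le> d \<omega>} * (\<integral>\<^sup>+\<omega>. ennreal (h (X 0 1 \<omega>)) \<partial>M))"
  proof (rule suminf_cong)
    fix i
    have "(\<integral>\<^sup>+\<omega>. indicator {\<omega>\<in>space M. Suc i \<le> d \<omega>} \<omega> * ennreal (h (X n (Suc i) \<omega>)) \<partial>M) =
       emeasure M {\<omega>\<in>space M. Suc i \<le> d \<omega>} * (\<integral>\<^sup>+\<omega>. ennreal (h (X n (Suc i) \<omega>)) \<partial>M)"
      by (rule indep_nn[OF disj sub1 sub2 set_S XS])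
    also have "(\<integral>\<^sup>+\<omega>. ennreal (h (X n (Suc i) \<omega>)) \<partial>M) = (\<integral>\<^sup>+\<omega>. ennreal (h (X 0 1 \<omega>)) \<partial>M)"
      using X_moment(3)[of "Suc i" id "\<lambda>x. ennreal (h x)" n] h(1) by simp
    finally show "(\<integral>\<^sup>+\<omega>. indicator {\<omega>\<in>space M. Suc i \<le> d \<omega>} \<omega> * ennreal (h (X n (Suc i) \<omega>)) \<partial>M) =
       emeasure M {\<omega>\<in>space M. Suc i \<le> d \<omega>} * (\<integral>\<^sup>+\<omega>. ennreal (h (X 0 1 \<omega>)) \<partial>M)" .
  qed
  also have "\<dots> = (\<Sum>i. emeasure M {\<omega>\<in>space M. Suc i \<le> d \<omega>}) * (\<integral>\<^sup>+\<omega>. ennreal (h (X 0 1 \<omega>)) \<partial>M)"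
    by simp
  also have "(\<Sum>i. emeasure M {\<omega>\<in>space M. Suc i \<le> d \<omega>}) = (\<integral>\<^sup>+\<omega>. of_nat (d \<omega>) \<partial>M)"
    using tail_sum[OF dM] by simp
  finally show ?thesis unfolding d_def .
qed

lemma D_integrable: "1 \<le> k \<Longrightarrow> integrable M (\<lambda>\<omega>. real (D n k \<omega>))"
  using D_moment(2)[of k real n] D_int by simp
lemma R_integrable: "1 \<le> k \<Longrightarrow> integrable M (R n k)"
  using R_moment(2)[of k id "\<lambda>_. 0" n] R_int by simp
lemma D_integral: "1 \<le> k \<Longrightarrow> (\<integral>\<omega>. real (D n k \<omega>) \<partial>M) = (\<integral>\<omega>. real (D 0 1 \<omega>) \<partial>M)"
  using D_moment(1)[of k real n] by simp
lemma R_integral: "1 \<le> k \<Longrightarrow> (\<integral>\<omega>. R n k \<omega> \<partial>M) = (\<integral>\<omega>. R 0 1 \<omega> \<partial>M)"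
  using R_moment(1)[of k id "\<lambda>_. 0" n] by simp

lemma ED_sum: "(\<integral>\<^sup>+\<omega>. of_nat (\<Sum>j=1..w. D n j \<omega>) \<partial>M) = ennreal (real w * (\<integral>\<omega>. real (D 0 1 \<omega>) \<partial>M))"
proof -
  have "(\<integral>\<^sup>+\<omega>. of_nat (\<Sum>j=1..w. D n j \<omega>) \<partial>M) = (\<integral>\<^sup>+\<omega>. ennreal (\<Sum>j=1..w. real (D n j \<omega>)) \<partial>M)"
    by (simp add: ennreal_of_nat_eq_real_of_nat)
  also have "\<dots> = ennreal (\<integral>\<omega>. (\<Sum>j=1..w. real (D n j \<omega>)) \<partial>M)"
    by (rule nn_integral_eq_integral) (auto intro!: Bochner_Integration.integrable_sum D_integrable sum_nonneg)
  also have "(\<integral>\<omega>. (\<Sum>j=1..w. real (D n j \<omega>)) \<partial>M) = (\<Sum>j=1..w. (\<integral>\<omega>. real (D n j \<omega>) \<partial>M))"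
    by (rule Bochner_Integration.integral_sum) (auto intro!: D_integrable)
  also have "\<dots> = (\<Sum>j=1..w. (\<integral>\<omega>. real (D 0 1 \<omega>) \<partial>M))"
    by (intro sum.cong refl D_integral) auto
  finally show ?thesis by simp
qed

lemma ER_sum:
  assumes "0 \<le> a"
  shows "(\<integral>\<^sup>+\<omega>. ennreal (a * (\<Sum>j=1..w. R n j \<omega>)) \<partial>M) = ennreal (a * (real w * (\<integral>\<omega>. R 0 1 \<omega> \<partial>M)))"
proof -
  have "(\<integral>\<^sup>+\<omega>. ennreal (a * (\<Sum>j=1..w. R n j \<omega>)) \<partial>M) = ennreal (\<integral>\<omega>. a * (\<Sum>j=1..w. R n j \<omega>) \<partial>M)"
    using assms R_nonneg
    by (intro nn_integral_eq_integral AE_I2) (auto intro!: Bochner_Integration.integrable_sum R_integrable sum_nonneg mult_nonneg_nonneg)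
  also have "(\<integral>\<omega>. a * (\<Sum>j=1..w. R n j \<omega>) \<partial>M) = a * (\<Sum>j=1..w. (\<integral>\<omega>. R n j \<omega> \<partial>M))"
    by (subst Bochner_Integration.integral_sum[symmetric]) (auto intro!: R_integrable)
  also have "\<dots> = a * (\<Sum>j=1..w. (\<integral>\<omega>. R 0 1 \<omega> \<partial>M))"
    by (intro arg_cong[where f="\<lambda>x. a * x"] sum.cong refl R_integral) auto
  finally show ?thesis by simp
qed

lemma G_pointwise:
  assumes \<omega>: "\<omega> \<in> space M" and a: "0 < a"
  shows "(of_nat (G D X R n w \<omega>) :: ennreal) \<le> ennreal (a * (\<Sum>j=1..w. R n j \<omega>)) +
     (\<Sum>i<(\<Sum>j=1..w. D n j \<omega>). ennreal (max 0 (1 - a * X n (Suc i) \<omega>)))"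
proof -
  define d where "d = (\<Sum>j=1..w. D n j \<omega>)"
  define s where "s = (\<Sum>j=1..w. R n j \<omega>)"
  define xs where "xs = map (\<lambda>k. X n k \<omega>) [1..<d+1]"
  let ?h = "\<lambda>x. max 0 (1 - a * x)"
  have nn: "\<forall>x\<in>set xs. 0 \<le> x" unfolding xs_def using X_nonneg[OF \<omega>] by auto
  have s0: "0 \<le> s" unfolding s_def using R_nonneg[OF \<omega>] by (auto intro: sum_nonneg)
  have "real (G D X R n w \<omega>) \<le> a * s + sum_list (map ?h xs)"
    unfolding G_def d_def[symmetric] s_def[symmetric] xs_def[symmetric]
    by (rule wf_count_upper[OF nn s0 a])
  also have "sum_list (map ?h xs) = (\<Sum>i<d. ?h (X n (Suc i) \<omega>))"
  proof -
    have "sum_list (map ?h xs) = sum_list (map (\<lambda>k. ?h (X n k \<omega>)) [1..<d+1])"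
      unfolding xs_def by (simp add: comp_def)
    also have "\<dots> = (\<Sum>k\<in>{1..<d+1}. ?h (X n k \<omega>))"
      by (simp add: sum_set_upt_conv_sum_list_nat[symmetric] del: upt_Suc)
    also have "\<dots> = (\<Sum>i<d. ?h (X n (Suc i) \<omega>))"
    proof -
      have "{1..<d+1} = {Suc 0..<Suc d}" by simp
      then show ?thesis by (simp only: sum.shift_bounds_Suc_ivl atLeast0LessThan)
    qed
    finally show ?thesis .
  qed
  finally have r: "real (G D X R n w \<omega>) \<le> a * s + (\<Sum>i<d. ?h (X n (Suc i) \<omega>))" .
  have "(of_nat (G D X R n w \<omega>) :: ennreal) = ennreal (real (G D X R n w \<omega>))"
    by (simp add: ennreal_of_nat_eq_real_of_nat)
  also have "\<dots> \<le> ennreal (a * s + (\<Sum>i<d. ?h (X n (Suc i) \<omega>)))"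
    using r by (rule ennreal_leI)
  also have "\<dots> = ennreal (a * s) + (\<Sum>i<d. ennreal (?h (X n (Suc i) \<omega>)))"
  proof -
    have e: "ennreal (\<Sum>i<d. ?h (X n (Suc i) \<omega>)) = (\<Sum>i<d. ennreal (?h (X n (Suc i) \<omega>)))"
      by (rule sum_ennreal[symmetric]) simp
    have "ennreal (a * s + (\<Sum>i<d. ?h (X n (Suc i) \<omega>))) = ennreal (a * s) + ennreal (\<Sum>i<d. ?h (X n (Suc i) \<omega>))"
      using a s0 by (intro ennreal_plus) (auto intro: sum_nonneg)
    then show ?thesis using e by simp
  qed
  finally show ?thesis unfolding d_def s_def .
qed

lemma q_integrable: "integrable M (\<lambda>\<omega>. (1 - t * X 0 1 \<omega>)\<^sup>2)"
proof -
  have e: "(\<lambda>\<omega>. (1 - t * X 0 1 \<omega>)\<^sup>2) = (\<lambda>\<omega>. 1 - 2 * t * X 0 1 \<omega> + t\<^sup>2 * (X 0 1 \<omega>)\<^sup>2)"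
    by (auto simp: power2_eq_square algebra_simps)
  show ?thesis unfolding e using X_int X_sq by auto
qed

lemma Gbound:
  assumes t: "0 < t"
  shows "(\<integral>\<^sup>+\<omega>. of_nat (G D X R n w \<omega>) \<partial>M) \<le>
    ennreal (real w * (2 * t * (\<integral>\<omega>. R 0 1 \<omega> \<partial>M) + (\<integral>\<omega>. real (D 0 1 \<omega>) \<partial>M) * (\<integral>\<omega>. (1 - t * X 0 1 \<omega>)\<^sup>2 \<partial>M)))"
proof -
  define mR where "mR = (\<integral>\<omega>. R 0 1 \<omega> \<partial>M)"
  define mD where "mD = (\<integral>\<omega>. real (D 0 1 \<omega>) \<partial>M)"
  define q where "q = (\<integral>\<omega>. (1 - t * X 0 1 \<omega>)\<^sup>2 \<partial>M)"
  define h where "h = (\<lambda>x::real. max 0 (1 - (2 * t) * x))"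
  define d where "d = (\<lambda>\<omega>. \<Sum>j=1..w. D n j \<omega>)"
  have a: "0 < 2 * t" using t by simp
  have mR0: "0 \<le> mR" unfolding mR_def using R_nonneg by (intro integral_nonneg_AE AE_I2) auto
  have mD0: "0 \<le> mD" unfolding mD_def by (intro integral_nonneg_AE AE_I2) auto
  have q0: "0 \<le> q" unfolding q_def by (intro integral_nonneg_AE AE_I2) auto
  have dM: "d \<in> measurable M (count_space UNIV)"
    unfolding d_def using measurable_from_subalg[OF subalg_Sig Dsum_Sig] .
  have hm: "h \<in> borel_measurable borel" unfolding h_def by measurable
  have Bm: "(\<lambda>\<omega>. \<Sum>i<d \<omega>. ennreal (h (X n (Suc i) \<omega>))) \<in> borel_measurable M"
  proof (rule measurable_compose_countable[where f="\<lambda>k \<omega>. \<Sum>i<k. ennreal (h (X n (Suc i) \<omega>))", OF _ dM])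
    fix k :: nat show "(\<lambda>\<omega>. \<Sum>i<k. ennreal (h (X n (Suc i) \<omega>))) \<in> borel_measurable M"
      using hm X_meas by measurable
  qed
  have Am: "(\<lambda>\<omega>. ennreal (2 * t * (\<Sum>j=1..w. R n j \<omega>))) \<in> borel_measurable M"
    using R_meas by measurable
  have "(\<integral>\<^sup>+\<omega>. of_nat (G D X R n w \<omega>) \<partial>M) \<le>
    (\<integral>\<^sup>+\<omega>. ennreal (2 * t * (\<Sum>j=1..w. R n j \<omega>)) + (\<Sum>i<d \<omega>. ennreal (h (X n (Suc i) \<omega>))) \<partial>M)"
    unfolding d_def h_def by (intro nn_integral_mono G_pointwise a)
  also have "\<dots> = (\<integral>\<^sup>+\<omega>. ennreal (2 * t * (\<Sum>j=1..w. R n j \<omega>)) \<partial>M) +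
      (\<integral>\<^sup>+\<omega>. (\<Sum>i<d \<omega>. ennreal (h (X n (Suc i) \<omega>))) \<partial>M)"
    by (rule nn_integral_add[OF Am Bm])
  also have "(\<integral>\<^sup>+\<omega>. ennreal (2 * t * (\<Sum>j=1..w. R n j \<omega>)) \<partial>M) = ennreal (2 * t * (real w * mR))"
    unfolding mR_def using t by (intro ER_sum) simp
  also have "(\<integral>\<^sup>+\<omega>. (\<Sum>i<d \<omega>. ennreal (h (X n (Suc i) \<omega>))) \<partial>M) =
      ennreal (real w * mD) * (\<integral>\<^sup>+\<omega>. ennreal (h (X 0 1 \<omega>)) \<partial>M)"
  proof -
    have h0: "\<And>x. 0 \<le> h x" unfolding h_def by simp
    show ?thesis using Esum_h[OF hm h0, where w=w and n=n] ED_sum[where w=w and n=n] unfolding d_def mD_def by simp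
  qed
  also have "(\<integral>\<^sup>+\<omega>. ennreal (h (X 0 1 \<omega>)) \<partial>M) \<le> ennreal q"
  proof -
    have "(\<integral>\<^sup>+\<omega>. ennreal (h (X 0 1 \<omega>)) \<partial>M) \<le> (\<integral>\<^sup>+\<omega>. ennreal ((1 - t * X 0 1 \<omega>)\<^sup>2) \<partial>M)"
    proof (intro nn_integral_mono ennreal_leI)
      fix \<omega>
      have "0 \<le> (t * X 0 1 \<omega>)\<^sup>2" by simp
      then have "1 - 2 * t * X 0 1 \<omega> \<le> (1 - t * X 0 1 \<omega>)\<^sup>2"
        by (simp add: power2_eq_square algebra_simps)
      then show "h (X 0 1 \<omega>) \<le> (1 - t * X 0 1 \<omega>)\<^sup>2" unfolding h_def by simp
    qed
    also have "\<dots> = ennreal q" unfolding q_def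
      by (intro nn_integral_eq_integral q_integrable AE_I2) simp
    finally show ?thesis .
  qed
  finally have "(\<integral>\<^sup>+\<omega>. of_nat (G D X R n w \<omega>) \<partial>M) \<le> ennreal (2 * t * (real w * mR)) + ennreal (real w * mD) * ennreal q"
    by (simp add: add_left_mono mult_left_mono)
  also have "\<dots> = ennreal (real w * (2 * t * mR + mD * q))"
  proof -
    have "ennreal (real w * mD) * ennreal q = ennreal (real w * mD * q)"
      using mD0 q0 by (intro ennreal_mult[symmetric]) auto
    moreover have "ennreal (2 * t * (real w * mR)) + ennreal (real w * mD * q) =
        ennreal (2 * t * (real w * mR) + real w * mD * q)"
      using t mR0 mD0 q0 by (intro ennreal_plus[symmetric]) auto
    moreover have "2 * t * (real w * mR) + real w * mD * q = real w * (2 * t * mR + mD * q)"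
      by (simp add: algebra_simps)
    ultimately show ?thesis by simp
  qed
  finally show ?thesis unfolding mR_def mD_def q_def .
qed

end

lemma alg:
  fixes m \<mu> r s2 :: real
  assumes m: "1 < m" and mu: "0 < \<mu>" and r0: "0 \<le> r" and rle: "r \<le> m * \<mu> * (1 - sqrt (1 - 1 / m))"
    and v: "s2 - \<mu>\<^sup>2 < (m * \<mu> - r)\<^sup>2 / (m * (m - 1)) - \<mu>\<^sup>2" and s2: "0 < s2"
  defines "t \<equiv> (m * \<mu> - r) / (m * s2)"
  shows "0 < t \<and> 2 * t * r + m * (1 - 2 * t * \<mu> + t\<^sup>2 * s2) < 1"
proof -
  define A where "A = m * \<mu> - r"
  have "0 < 1 - 1 / m" using m by (simp add: field_simps)
  then have "0 < sqrt (1 - 1 / m)" by simp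
  then have "m * \<mu> * (1 - sqrt (1 - 1 / m)) < m * \<mu>" using m mu by (simp add: algebra_simps)
  then have A0: "0 < A" unfolding A_def using rle by simp
  have t0: "0 < t" unfolding t_def A_def[symmetric] using A0 m s2 by simp
  have e: "2 * t * r + m * (1 - 2 * t * \<mu> + t\<^sup>2 * s2) = m - A\<^sup>2 / (m * s2)"
    unfolding t_def A_def[symmetric] using m s2 
    by (simp add: field_simps power2_eq_square A_def)
  have "s2 < A\<^sup>2 / (m * (m - 1))" using v unfolding A_def by simp
  then have "s2 * (m * (m - 1)) < A\<^sup>2" using m by (simp add: field_simps)
  then have "m - 1 < A\<^sup>2 / (m * s2)" using m s2 by (simp add: field_simps)
  then show ?thesis using t0 e by simp
qed

context wfp begin

lemma EW_step:
  assumes t: "0 < t"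
  defines "c \<equiv> 2 * t * (\<integral>\<omega>. R 0 1 \<omega> \<partial>M) + (\<integral>\<omega>. real (D 0 1 \<omega>) \<partial>M) * (\<integral>\<omega>. (1 - t * X 0 1 \<omega>)\<^sup>2 \<partial>M)"
  shows "(\<integral>\<^sup>+\<omega>. of_nat (W (Suc n) \<omega>) \<partial>M) \<le> ennreal c * (\<integral>\<^sup>+\<omega>. of_nat (W n \<omega>) \<partial>M)"
proof -
  have c0: "0 \<le> c" unfolding c_def using t R_nonneg
    by (intro add_nonneg_nonneg mult_nonneg_nonneg integral_nonneg_AE AE_I2) auto
  have "(\<integral>\<^sup>+\<omega>. of_nat (W (Suc n) \<omega>) \<partial>M) =
   (\<Sum>w. emeasure M {\<omega>\<in>space M. W n \<omega> = w} * (\<integral>\<^sup>+\<omega>. of_nat (G D X R n w \<omega>) \<partial>M))"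
    by (rule EW_Suc)
  also have "\<dots> \<le> (\<Sum>w. emeasure M {\<omega>\<in>space M. W n \<omega> = w} * ennreal (real w * c))"
    using Gbound[OF t] unfolding c_def by (intro suminf_le mult_left_mono) auto
  also have "\<dots> = (\<Sum>w. ennreal c * (emeasure M {\<omega>\<in>space M. W n \<omega> = w} * of_nat w))"
  proof (rule suminf_cong)
    fix w
    have "ennreal (real w * c) = of_nat w * ennreal c"
      using c0 by (simp add: ennreal_mult ennreal_of_nat_eq_real_of_nat)
    then show "emeasure M {\<omega>\<in>space M. W n \<omega> = w} * ennreal (real w * c) =
      ennreal c * (emeasure M {\<omega>\<in>space M. W n \<omega> = w} * of_nat w)" by (simp add: ac_simps)
  qed
  also have "\<dots> = ennreal c * (\<integral>\<^sup>+\<omega>. of_nat (W n \<omega>) \<partial>M)"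
    by (simp add: EW)
  finally show ?thesis .
qed

lemma EW_pow:
  assumes t: "0 < t"
  defines "c \<equiv> 2 * t * (\<integral>\<omega>. R 0 1 \<omega> \<partial>M) + (\<integral>\<omega>. real (D 0 1 \<omega>) \<partial>M) * (\<integral>\<omega>. (1 - t * X 0 1 \<omega>)\<^sup>2 \<partial>M)"
  shows "(\<integral>\<^sup>+\<omega>. of_nat (W n \<omega>) \<partial>M) \<le> ennreal (c ^ n)"
proof (induction n)
  case 0
  have "(\<integral>\<^sup>+\<omega>. of_nat (W 0 \<omega>) \<partial>M) = emeasure M (space M)" by simp
  then show ?case by (simp add: emeasure_space_1)
next
  case (Suc n)
  have c0: "0 \<le> c" unfolding c_def using t R_nonneg
    by (intro add_nonneg_nonneg mult_nonneg_nonneg integral_nonneg_AE AE_I2) auto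
  have "(\<integral>\<^sup>+\<omega>. of_nat (W (Suc n) \<omega>) \<partial>M) \<le> ennreal c * (\<integral>\<^sup>+\<omega>. of_nat (W n \<omega>) \<partial>M)"
    unfolding c_def by (rule EW_step[OF t])
  also have "\<dots> \<le> ennreal c * ennreal (c ^ n)" using Suc by (rule mult_left_mono) simp
  also have "\<dots> = ennreal (c ^ Suc n)" using c0 by (simp add: ennreal_mult[symmetric])
  finally show ?case .
qed

lemma extinct_if:
  assumes t: "0 < t"
  defines "c \<equiv> 2 * t * (\<integral>\<omega>. R 0 1 \<omega> \<partial>M) + (\<integral>\<omega>. real (D 0 1 \<omega>) \<partial>M) * (\<integral>\<omega>. (1 - t * X 0 1 \<omega>)\<^sup>2 \<partial>M)"
  assumes c1: "c < 1"
  shows "prob {\<omega>\<in>space M. (\<lambda>n. W n \<omega>) \<longlonglongrightarrow> 0} = 1"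
proof -
  have c0: "0 \<le> c" unfolding c_def using t R_nonneg
    by (intro add_nonneg_nonneg mult_nonneg_nonneg integral_nonneg_AE AE_I2) auto
  have nz: "prob {\<omega>\<in>space M. W n \<omega> \<noteq> 0} \<le> c ^ n" for n
  proof -
    have "emeasure M {\<omega>\<in>space M. W n \<omega> \<noteq> 0} = (\<integral>\<^sup>+\<omega>. indicator {\<omega>\<in>space M. W n \<omega> \<noteq> 0} \<omega> \<partial>M)"
      by (subst nn_integral_indicator) measurable
    also have "\<dots> \<le> (\<integral>\<^sup>+\<omega>. of_nat (W n \<omega>) \<partial>M)"
      by (intro nn_integral_mono) (auto simp: indicator_def)
    also have "\<dots> \<le> ennreal (c ^ n)" unfolding c_def by (rule EW_pow[OF t])
    finally show ?thesis using c0 by (simp add: emeasure_eq_measure)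
  qed
  have ge: "1 - c ^ n \<le> prob {\<omega>\<in>space M. (\<lambda>n. W n \<omega>) \<longlonglongrightarrow> 0}" for n
  proof -
    have "{\<omega>\<in>space M. W n \<omega> = 0} \<subseteq> {\<omega>\<in>space M. (\<lambda>n. W n \<omega>) \<longlonglongrightarrow> 0}"
      using W_tendsto_iff by auto
    then have "prob {\<omega>\<in>space M. W n \<omega> = 0} \<le> prob {\<omega>\<in>space M. (\<lambda>n. W n \<omega>) \<longlonglongrightarrow> 0}"
      using qW_set_meas by (intro finite_measure_mono) auto
    moreover have "prob {\<omega>\<in>space M. W n \<omega> = 0} = 1 - prob {\<omega>\<in>space M. W n \<omega> \<noteq> 0}"
    proof -
      have "{\<omega>\<in>space M. W n \<omega> = 0} = space M - {\<omega>\<in>space M. W n \<omega> \<noteq> 0}" by auto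
      moreover have "{\<omega>\<in>space M. W n \<omega> \<noteq> 0} \<in> events" by measurable
      ultimately show ?thesis by (simp add: prob_compl)
    qed
    ultimately show ?thesis using nz[of n] by simp
  qed
  have lim: "(\<lambda>n. c ^ n) \<longlonglongrightarrow> 0" using c0 c1 by (intro LIMSEQ_power_zero) simp
  have "1 \<le> prob {\<omega>\<in>space M. (\<lambda>n. W n \<omega>) \<longlonglongrightarrow> 0}"
  proof (rule ccontr)
    assume "\<not> ?thesis"
    then have "0 < 1 - prob {\<omega>\<in>space M. (\<lambda>n. W n \<omega>) \<longlonglongrightarrow> 0}" by simp
    then obtain n where "c ^ n < 1 - prob {\<omega>\<in>space M. (\<lambda>n. W n \<omega>) \<longlonglongrightarrow> 0}"
      using lim by (metis (no_types, lifting) LIMSEQ_D diff_zero dist_real_def order_refl real_norm_def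
          abs_of_nonneg zero_le_power c0 norm_eq_zero)
    then show False using ge[of n] by simp
  qed
  then show ?thesis using prob_le_1 by (simp add: antisym)
qed

lemma X_var: "variance (X 0 1) = (\<integral>\<omega>. (X 0 1 \<omega>)\<^sup>2 \<partial>M) - (\<integral>\<omega>. X 0 1 \<omega> \<partial>M)\<^sup>2"
proof -
  define \<mu> where "\<mu> = (\<integral>\<omega>. X 0 1 \<omega> \<partial>M)"
  have e: "(\<lambda>\<omega>. (X 0 1 \<omega> - \<mu>)\<^sup>2) = (\<lambda>\<omega>. (X 0 1 \<omega>)\<^sup>2 + (- 2 * \<mu>) * X 0 1 \<omega> + \<mu>\<^sup>2)"
    by (auto simp: power2_eq_square algebra_simps)
  have "(\<integral>\<omega>. (X 0 1 \<omega>)\<^sup>2 + (- 2 * \<mu>) * X 0 1 \<omega> + \<mu>\<^sup>2 \<partial>M) =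
    (\<integral>\<omega>. (X 0 1 \<omega>)\<^sup>2 \<partial>M) + (- 2 * \<mu>) * \<mu> + \<mu>\<^sup>2"
    using X_int X_sq unfolding \<mu>_def by (simp add: prob_space)
  then show ?thesis unfolding \<mu>_def[symmetric] e by (simp add: power2_eq_square)
qed

lemma q_eq: "(\<integral>\<omega>. (1 - t * X 0 1 \<omega>)\<^sup>2 \<partial>M) = 1 - 2 * t * (\<integral>\<omega>. X 0 1 \<omega> \<partial>M) + t\<^sup>2 * (\<integral>\<omega>. (X 0 1 \<omega>)\<^sup>2 \<partial>M)"
proof -
  have e: "(\<lambda>\<omega>. (1 - t * X 0 1 \<omega>)\<^sup>2) = (\<lambda>\<omega>. 1 + (- 2 * t) * X 0 1 \<omega> + t\<^sup>2 * (X 0 1 \<omega>)\<^sup>2)"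
    by (auto simp: power2_eq_square algebra_simps)
  show ?thesis unfolding e using X_int X_sq by (simp add: prob_space)
qed

lemma partii:
  defines "m \<equiv> (\<integral>\<omega>. real (D 0 1 \<omega>) \<partial>M)" and "\<mu> \<equiv> (\<integral>\<omega>. X 0 1 \<omega> \<partial>M)"
    and "r \<equiv> (\<integral>\<omega>. R 0 1 \<omega> \<partial>M)"
  assumes m1: "1 < m" and mu: "0 < \<mu>" and rle: "r \<le> m * \<mu> * (1 - sqrt (1 - 1 / m))"
    and v: "variance (X 0 1) < (m * \<mu> - r)\<^sup>2 / (m * (m - 1)) - \<mu>\<^sup>2"
  shows "prob {\<omega>\<in>space M. (\<lambda>n. W n \<omega>) \<longlonglongrightarrow> 0} = 1"
proof -
  define s2 where "s2 = (\<integral>\<omega>. (X 0 1 \<omega>)\<^sup>2 \<partial>M)"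
  have var: "variance (X 0 1) = s2 - \<mu>\<^sup>2" unfolding s2_def \<mu>_def by (rule X_var)
  have "0 \<le> variance (X 0 1)" by (intro integral_nonneg_AE AE_I2) simp
  then have s2: "0 < s2" using var mu by (smt (verit) zero_less_power)
  have r0: "0 \<le> r" unfolding r_def using R_nonneg by (intro integral_nonneg_AE AE_I2) auto
  define t where "t = (m * \<mu> - r) / (m * s2)"
  have at: "0 < t \<and> 2 * t * r + m * (1 - 2 * t * \<mu> + t\<^sup>2 * s2) < 1"
    unfolding t_def by (rule alg[OF m1 mu r0 rle _ s2]) (use v var in simp)
  show ?thesis
  proof (rule extinct_if)
    show "0 < t" using at by simp
    show "2 * t * (\<integral>\<omega>. R 0 1 \<omega> \<partial>M) + (\<integral>\<omega>. real (D 0 1 \<omega>) \<partial>M) * (\<integral>\<omega>. (1 - t * X 0 1 \<omega>)\<^sup>2 \<partial>M) < 1"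
      using at unfolding q_eq m_def[symmetric] r_def[symmetric] \<mu>_def[symmetric] s2_def[symmetric] by simp
  qed
qed

end

context wfp begin

lemma pair_indep:
  assumes "i \<in> wf_index" "j \<in> wf_index" "i \<noteq> j"
    and "integrable M (Fam i)" "integrable M (Fam j)"
  shows "(\<integral>\<omega>. (Fam i \<omega> - c) * (Fam j \<omega> - c) \<partial>M) = (\<integral>\<omega>. Fam i \<omega> - c \<partial>M) * (\<integral>\<omega>. Fam j \<omega> - c \<partial>M)"
    and "integrable M (\<lambda>\<omega>. (Fam i \<omega> - c) * (Fam j \<omega> - c))"
proof -
  have ind: "indep_vars (\<lambda>_. borel) (\<lambda>k \<omega>. Fam k \<omega> - c) {i, j}"
  proof (rule indep_vars_subset[OF _ ])
    show "indep_vars (\<lambda>_. borel) (\<lambda>k \<omega>. Fam k \<omega> - c) wf_index"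
      using indep_vars_compose2[OF indep, of "\<lambda>_ x. x - c" "\<lambda>_. borel"] by simp
  qed (use assms in auto)
  have int: "\<And>k. k \<in> {i, j} \<Longrightarrow> integrable M (\<lambda>\<omega>. Fam k \<omega> - c)" using assms by auto
  show "(\<integral>\<omega>. (Fam i \<omega> - c) * (Fam j \<omega> - c) \<partial>M) = (\<integral>\<omega>. Fam i \<omega> - c \<partial>M) * (\<integral>\<omega>. Fam j \<omega> - c \<partial>M)"
    using indep_vars_lebesgue_integral[OF _ ind int] assms(3) by simp
  show "integrable M (\<lambda>\<omega>. (Fam i \<omega> - c) * (Fam j \<omega> - c))"
    using indep_vars_integrable[OF _ ind int] assms(3) by simp
qed

lemma cheb:
  fixes \<iota> :: "nat \<Rightarrow> (nat \<times> nat) + (nat \<times> nat) + (nat \<times> nat)"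
  assumes S: "finite S" and inj: "inj_on \<iota> S" and sub: "\<iota> ` S \<subseteq> wf_index"
    and int: "\<And>j. j \<in> S \<Longrightarrow> integrable M (Fam (\<iota> j))"
    and sq: "\<And>j. j \<in> S \<Longrightarrow> integrable M (\<lambda>\<omega>. (Fam (\<iota> j) \<omega>)\<^sup>2)"
    and mean: "\<And>j. j \<in> S \<Longrightarrow> (\<integral>\<omega>. Fam (\<iota> j) \<omega> \<partial>M) = c"
    and var: "\<And>j. j \<in> S \<Longrightarrow> (\<integral>\<omega>. (Fam (\<iota> j) \<omega> - c)\<^sup>2 \<partial>M) = V"
    and eps: "0 < \<epsilon>"
  shows "prob {\<omega>\<in>space M. \<epsilon> \<le> \<bar>(\<Sum>j\<in>S. Fam (\<iota> j) \<omega>) - real (card S) * c\<bar>} \<le> real (card S) * V / \<epsilon>\<^sup>2"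
proof -
  define Z where "Z = (\<lambda>j \<omega>. Fam (\<iota> j) \<omega> - c)"
  define f where "f = (\<lambda>\<omega>. \<Sum>j\<in>S. Z j \<omega>)"
  have fe: "\<And>\<omega>. f \<omega> = (\<Sum>j\<in>S. Fam (\<iota> j) \<omega>) - real (card S) * c"
    unfolding f_def Z_def by (simp add: sum_subtractf)
  have Zint: "\<And>j. j \<in> S \<Longrightarrow> integrable M (Z j)" unfolding Z_def using int by auto
  have Z0: "\<And>j. j \<in> S \<Longrightarrow> (\<integral>\<omega>. Z j \<omega> \<partial>M) = 0" unfolding Z_def using int mean by (simp add: prob_space)
  have Zsq: "\<And>j. j \<in> S \<Longrightarrow> integrable M (\<lambda>\<omega>. Z j \<omega> * Z j \<omega>)"
  proof -
    fix j assume j: "j \<in> S"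
    have e: "(\<lambda>\<omega>. Z j \<omega> * Z j \<omega>) = (\<lambda>\<omega>. (Fam (\<iota> j) \<omega>)\<^sup>2 + (- 2 * c) * Fam (\<iota> j) \<omega> + c\<^sup>2)"
      unfolding Z_def by (auto simp: power2_eq_square algebra_simps)
    show "integrable M (\<lambda>\<omega>. Z j \<omega> * Z j \<omega>)" unfolding e using int[OF j] sq[OF j] by auto
  qed
  have prod: "\<And>i j. i \<in> S \<Longrightarrow> j \<in> S \<Longrightarrow> integrable M (\<lambda>\<omega>. Z i \<omega> * Z j \<omega>) \<and>
      (\<integral>\<omega>. Z i \<omega> * Z j \<omega> \<partial>M) = (if i = j then V else 0)"
  proof -
    fix i j assume i: "i \<in> S" and j: "j \<in> S"
    show "integrable M (\<lambda>\<omega>. Z i \<omega> * Z j \<omega>) \<and> (\<integral>\<omega>. Z i \<omega> * Z j \<omega> \<partial>M) = (if i = j then V else 0)"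
    proof (cases "i = j")
      case True
      then show ?thesis using Zsq[OF i] var[OF i] unfolding Z_def by (simp add: power2_eq_square)
    next
      case False
      then have ne: "\<iota> i \<noteq> \<iota> j" using inj i j by (auto dest: inj_onD)
      have ii: "\<iota> i \<in> wf_index" "\<iota> j \<in> wf_index" using sub i j by auto
      show ?thesis using pair_indep[OF ii ne int[OF i] int[OF j], of c] Z0[OF i] Z0[OF j] False
        unfolding Z_def by simp
    qed
  qed
  have f2: "(\<lambda>\<omega>. (f \<omega>)\<^sup>2) = (\<lambda>\<omega>. \<Sum>i\<in>S. \<Sum>j\<in>S. Z i \<omega> * Z j \<omega>)"
    unfolding f_def by (auto simp: power2_eq_square sum_product)
  have f2int: "integrable M (\<lambda>\<omega>. (f \<omega>)\<^sup>2)"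
    unfolding f2 using prod by (intro Bochner_Integration.integrable_sum) auto
  have f2val: "(\<integral>\<omega>. (f \<omega>)\<^sup>2 \<partial>M) = real (card S) * V"
  proof -
    have "(\<integral>\<omega>. (f \<omega>)\<^sup>2 \<partial>M) = (\<Sum>i\<in>S. \<Sum>j\<in>S. (\<integral>\<omega>. Z i \<omega> * Z j \<omega> \<partial>M))"
      unfolding f2 using prod
      by (subst Bochner_Integration.integral_sum, auto intro!: Bochner_Integration.integrable_sum
          simp: Bochner_Integration.integral_sum)
    also have "\<dots> = (\<Sum>i\<in>S. \<Sum>j\<in>S. (if i = j then V else 0))"
      using prod by (intro sum.cong refl) auto
    also have "\<dots> = real (card S) * V" using S by simp
    finally show ?thesis .
  qed
  have fint: "integrable M f" unfolding f_def using Zint by auto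
  have fm: "(\<integral>\<omega>. f \<omega> \<partial>M) = 0" unfolding f_def using Zint Z0 by (simp add: Bochner_Integration.integral_sum)
  have frv: "random_variable borel f" using fint by auto
  have "prob {\<omega>\<in>space M. \<bar>f \<omega> - expectation f\<bar> \<ge> \<epsilon>} \<le> variance f / \<epsilon>\<^sup>2"
    by (rule Chebyshev_inequality[OF frv f2int eps])
  moreover have "variance f = real (card S) * V" using fm f2val by simp
  ultimately show ?thesis using fm unfolding fe by simp
qed

end

context wfp begin

lemma G_lower:
  assumes \<omega>: "\<omega> \<in> space M" and L: "L \<le> (\<Sum>j=1..v. D n j \<omega>)" and k: "1 \<le> k" "k \<le> L"
    and le: "real k * (\<Sum>i=1..L. X n i \<omega>) \<le> real L * (\<Sum>j=1..v. R n j \<omega>)"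
  shows "k \<le> G D X R n v \<omega>"
proof -
  define d where "d = (\<Sum>j=1..v. D n j \<omega>)"
  define xs where "xs = map (\<lambda>k. X n k \<omega>) [1..<d+1]"
  have nn: "\<forall>x\<in>set xs. 0 \<le> x" unfolding xs_def using X_nonneg[OF \<omega>] by auto
  have lx: "length xs = d" unfolding xs_def by simp
  have tk: "take L xs = map (\<lambda>k. X n k \<omega>) [1..<L+1]"
    unfolding xs_def using L d_def by (simp add: take_map del: upt_Suc)
  have "sum_list (take L xs) = (\<Sum>i=1..L. X n i \<omega>)"
  proof -
    have "sum_list (take L xs) = (\<Sum>i\<in>{1..<L+1}. X n i \<omega>)"
      unfolding tk by (simp add: sum_set_upt_conv_sum_list_nat[symmetric] del: upt_Suc)
    also have "{1..<L+1} = {1..L}" by auto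
    finally show ?thesis .
  qed
  then have "k \<le> wf_count xs (\<Sum>j=1..v. R n j \<omega>)"
    using wf_count_lower[OF nn k, of "\<Sum>j=1..v. R n j \<omega>"] L lx le d_def by simp
  then show ?thesis unfolding G_def d_def[symmetric] xs_def[symmetric] .
qed

lemma chebD:
  assumes "0 < \<epsilon>"
  shows "prob {\<omega>\<in>space M. \<epsilon> \<le> \<bar>(\<Sum>j=1..v. real (D n j \<omega>)) - real v * (\<integral>\<omega>. real (D 0 1 \<omega>) \<partial>M)\<bar>}
    \<le> real v * (\<integral>\<omega>. (real (D 0 1 \<omega>) - (\<integral>\<omega>. real (D 0 1 \<omega>) \<partial>M))\<^sup>2 \<partial>M) / \<epsilon>\<^sup>2"
proof -
  let ?m = "\<integral>\<omega>. real (D 0 1 \<omega>) \<partial>M"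
  have "prob {\<omega>\<in>space M. \<epsilon> \<le> \<bar>(\<Sum>j\<in>{1..v}. Fam ((\<lambda>j. Inl (n, j)) j) \<omega>) - real (card {1..v}) * ?m\<bar>}
    \<le> real (card {1..v}) * (\<integral>\<omega>. (real (D 0 1 \<omega>) - ?m)\<^sup>2 \<partial>M) / \<epsilon>\<^sup>2"
  proof (rule cheb)
    fix j assume j: "j \<in> {1..v}"
    then have j1: "1 \<le> j" by simp
    show "integrable M (Fam (Inl (n, j)))" using D_integrable[OF j1] by (simp add: Fam_D)
    show "integrable M (\<lambda>\<omega>. (Fam (Inl (n, j)) \<omega>)\<^sup>2)"
      using D_moment(2)[OF j1, of "\<lambda>x. (real x)\<^sup>2" n] D_sq by (simp add: Fam_D)
    show "(\<integral>\<omega>. Fam (Inl (n, j)) \<omega> \<partial>M) = ?m" using D_integral[OF j1] by (simp add: Fam_D)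
    show "(\<integral>\<omega>. (Fam (Inl (n, j)) \<omega> - ?m)\<^sup>2 \<partial>M) = (\<integral>\<omega>. (real (D 0 1 \<omega>) - ?m)\<^sup>2 \<partial>M)"
      using D_moment(1)[OF j1, of "\<lambda>x. (real x - ?m)\<^sup>2" n] by (simp add: Fam_D)
  qed (use assms in \<open>auto simp: inj_on_def wf_index_def\<close>)
  then show ?thesis by (simp add: Fam_D)
qed

lemma chebR:
  assumes "0 < \<epsilon>"
  shows "prob {\<omega>\<in>space M. \<epsilon> \<le> \<bar>(\<Sum>j=1..v. R n j \<omega>) - real v * (\<integral>\<omega>. R 0 1 \<omega> \<partial>M)\<bar>}
    \<le> real v * (\<integral>\<omega>. (R 0 1 \<omega> - (\<integral>\<omega>. R 0 1 \<omega> \<partial>M))\<^sup>2 \<partial>M) / \<epsilon>\<^sup>2"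
proof -
  let ?m = "\<integral>\<omega>. R 0 1 \<omega> \<partial>M"
  have "prob {\<omega>\<in>space M. \<epsilon> \<le> \<bar>(\<Sum>j\<in>{1..v}. Fam ((\<lambda>j. Inr (Inr (n, j))) j) \<omega>) - real (card {1..v}) * ?m\<bar>}
    \<le> real (card {1..v}) * (\<integral>\<omega>. (R 0 1 \<omega> - ?m)\<^sup>2 \<partial>M) / \<epsilon>\<^sup>2"
  proof (rule cheb)
    fix j assume j: "j \<in> {1..v}"
    then have j1: "1 \<le> j" by simp
    show "integrable M (Fam (Inr (Inr (n, j))))" using R_integrable[OF j1] by (simp add: Fam_R)
    show "integrable M (\<lambda>\<omega>. (Fam (Inr (Inr (n, j))) \<omega>)\<^sup>2)"
      using R_moment(2)[OF j1, of "\<lambda>x. x\<^sup>2" "\<lambda>_. 0" n] R_sq by (simp add: Fam_R)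
    show "(\<integral>\<omega>. Fam (Inr (Inr (n, j))) \<omega> \<partial>M) = ?m" using R_integral[OF j1] by (simp add: Fam_R)
    show "(\<integral>\<omega>. (Fam (Inr (Inr (n, j))) \<omega> - ?m)\<^sup>2 \<partial>M) = (\<integral>\<omega>. (R 0 1 \<omega> - ?m)\<^sup>2 \<partial>M)"
      using R_moment(1)[OF j1, of "\<lambda>x. (x - ?m)\<^sup>2" "\<lambda>_. 0" n] by (simp add: Fam_R)
  qed (use assms in \<open>auto simp: inj_on_def wf_index_def\<close>)
  then show ?thesis by (simp add: Fam_R)
qed

lemma chebX:
  assumes "0 < \<epsilon>"
  shows "prob {\<omega>\<in>space M. \<epsilon> \<le> \<bar>(\<Sum>j=1..v. X n j \<omega>) - real v * (\<integral>\<omega>. X 0 1 \<omega> \<partial>M)\<bar>}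
    \<le> real v * (\<integral>\<omega>. (X 0 1 \<omega> - (\<integral>\<omega>. X 0 1 \<omega> \<partial>M))\<^sup>2 \<partial>M) / \<epsilon>\<^sup>2"
proof -
  let ?m = "\<integral>\<omega>. X 0 1 \<omega> \<partial>M"
  have "prob {\<omega>\<in>space M. \<epsilon> \<le> \<bar>(\<Sum>j\<in>{1..v}. Fam ((\<lambda>j. Inr (Inl (n, j))) j) \<omega>) - real (card {1..v}) * ?m\<bar>}
    \<le> real (card {1..v}) * (\<integral>\<omega>. (X 0 1 \<omega> - ?m)\<^sup>2 \<partial>M) / \<epsilon>\<^sup>2"
  proof (rule cheb)
    fix j assume j: "j \<in> {1..v}"
    then have j1: "1 \<le> j" by simp
    show "integrable M (Fam (Inr (Inl (n, j))))" using X_moment(2)[OF j1, of id "\<lambda>_. 0" n] X_int by (simp add: Fam_X)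
    show "integrable M (\<lambda>\<omega>. (Fam (Inr (Inl (n, j))) \<omega>)\<^sup>2)"
      using X_moment(2)[OF j1, of "\<lambda>x. x\<^sup>2" "\<lambda>_. 0" n] X_sq by (simp add: Fam_X)
    show "(\<integral>\<omega>. Fam (Inr (Inl (n, j))) \<omega> \<partial>M) = ?m" using X_moment(1)[OF j1, of id "\<lambda>_. 0" n] by (simp add: Fam_X)
    show "(\<integral>\<omega>. (Fam (Inr (Inl (n, j))) \<omega> - ?m)\<^sup>2 \<partial>M) = (\<integral>\<omega>. (X 0 1 \<omega> - ?m)\<^sup>2 \<partial>M)"
      using X_moment(1)[OF j1, of "\<lambda>x. (x - ?m)\<^sup>2" "\<lambda>_. 0" n] by (simp add: Fam_X)
  qed (use assms in \<open>auto simp: inj_on_def wf_index_def\<close>)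
  then show ?thesis by (simp add: Fam_X)
qed

end

lemma aux_div: fixes x V a :: real assumes "0 < x" shows "x * V / (a * x)\<^sup>2 = V / a\<^sup>2 / x"
  using assms by (cases "a = 0") (simp_all add: power_mult_distrib power2_eq_square)

locale wfi = wfp +
  assumes m_gt1: "1 < (\<integral>\<omega>. real (D 0 1 \<omega>) \<partial>M)"
    and mu_pos: "0 < (\<integral>\<omega>. X 0 1 \<omega> \<partial>M)"
    and mu_lt_r: "(\<integral>\<omega>. X 0 1 \<omega> \<partial>M) < (\<integral>\<omega>. R 0 1 \<omega> \<partial>M)"
begin

definition "mD = (\<integral>\<omega>. real (D 0 1 \<omega>) \<partial>M)"
definition "mR = (\<integral>\<omega>. R 0 1 \<omega> \<partial>M)"
definition "mX = (\<integral>\<omega>. X 0 1 \<omega> \<partial>M)"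
definition "VD = (\<integral>\<omega>. (real (D 0 1 \<omega>) - mD)\<^sup>2 \<partial>M)"
definition "VR = (\<integral>\<omega>. (R 0 1 \<omega> - mR)\<^sup>2 \<partial>M)"
definition "VX = (\<integral>\<omega>. (X 0 1 \<omega> - mX)\<^sup>2 \<partial>M)"
definition "m1 = (1 + mD) / 2"
definition "\<mu>1 = (2 * mX + mR) / 3"
definition "r1 = (mX + 2 * mR) / 3"
definition "\<rho> = min m1 (r1 / \<mu>1)"
definition "\<rho>2 = (1 + \<rho>) / 2"
definition "V0 = max 1 (2 / (\<rho> - 1))"
definition "Cst = VD / (mD - m1)\<^sup>2 + VR / (mR - r1)\<^sup>2 + VX / (\<mu>1 - mX)\<^sup>2"

lemma par_facts:
  shows "1 < m1" "m1 < mD" "0 < mX" "mX < \<mu>1" "\<mu>1 < r1" "r1 < mR" "1 < \<rho>" "\<rho> \<le> m1" "\<rho> \<le> r1 / \<mu>1"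
    "1 < \<rho>2" "\<rho>2 < \<rho>" "1 \<le> V0" "2 / (\<rho> - 1) \<le> V0" "0 \<le> VD" "0 \<le> VR" "0 \<le> VX" "0 \<le> Cst"
proof -
  have a: "1 < mD" "0 < mX" "mX < mR" using m_gt1 mu_pos mu_lt_r by (auto simp: mD_def mX_def mR_def)
  show "1 < m1" "m1 < mD" using a by (auto simp: m1_def)
  show "0 < mX" "mX < \<mu>1" "\<mu>1 < r1" "r1 < mR" using a by (auto simp: \<mu>1_def r1_def)
  have "0 < \<mu>1" using a by (auto simp: \<mu>1_def)
  then have "1 < r1 / \<mu>1" using a by (auto simp: \<mu>1_def r1_def field_simps)
  moreover have "1 < m1" using a by (auto simp: m1_def)
  ultimately show r: "1 < \<rho>" by (auto simp: \<rho>_def)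
  show "\<rho> \<le> m1" "\<rho> \<le> r1 / \<mu>1" by (auto simp: \<rho>_def)
  show "1 < \<rho>2" "\<rho>2 < \<rho>" using r by (auto simp: \<rho>2_def)
  show "1 \<le> V0" "2 / (\<rho> - 1) \<le> V0" by (auto simp: V0_def)
  show "0 \<le> VD" "0 \<le> VR" "0 \<le> VX" unfolding VD_def VR_def VX_def
    by (auto intro!: integral_nonneg_AE AE_I2)
  then show "0 \<le> Cst" unfolding Cst_def by auto
qed

lemma fail_bound:
  assumes v: "V0 \<le> real v"
  shows "prob {\<omega>\<in>space M. real (G D X R n v \<omega>) < \<rho>2 * real v} \<le> Cst / real v"
proof -
  note pf = par_facts
  have v1: "1 \<le> real v" using v pf by linarith
  define L where "L = nat \<lceil>m1 * real v\<rceil>"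
  have "0 \<le> m1 * real v" using pf(1) by simp
  then have c0: "0 \<le> \<lceil>m1 * real v\<rceil>" by simp
  have Le: "real L = real_of_int \<lceil>m1 * real v\<rceil>" unfolding L_def using c0 by simp
  have L1: "m1 * real v \<le> real L" "real L < m1 * real v + 1"
    unfolding Le using ceiling_correct[of "m1 * real v"] by linarith+
  have Lv: "real v \<le> real L" using L1 pf v1 by (smt (verit) mult_le_cancel_right1)
  define k where "k = min L (nat \<lfloor>r1 * real v / \<mu>1\<rfloor>)"
  have mu1: "0 < \<mu>1" using pf by linarith
  have fl: "r1 * real v / \<mu>1 - 1 < real (nat \<lfloor>r1 * real v / \<mu>1\<rfloor>)"
    "real (nat \<lfloor>r1 * real v / \<mu>1\<rfloor>) \<le> r1 * real v / \<mu>1"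
  proof -
    have "0 \<le> r1 * real v / \<mu>1" using mu1 pf by simp
    then have "real (nat \<lfloor>r1 * real v / \<mu>1\<rfloor>) = real_of_int \<lfloor>r1 * real v / \<mu>1\<rfloor>" by simp
    then show "r1 * real v / \<mu>1 - 1 < real (nat \<lfloor>r1 * real v / \<mu>1\<rfloor>)"
      "real (nat \<lfloor>r1 * real v / \<mu>1\<rfloor>) \<le> r1 * real v / \<mu>1"
      using floor_correct[of "r1 * real v / \<mu>1"] by linarith+
  qed
  have rv: "\<rho> * real v \<le> r1 * real v / \<mu>1"
  proof -
    have "\<rho> * real v \<le> (r1 / \<mu>1) * real v" using pf(9) by (rule mult_right_mono) simp
    then show ?thesis by simp
  qed
  have rv2: "\<rho>2 * real v + 1 \<le> \<rho> * real v"
  proof -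
    have "2 / (\<rho> - 1) \<le> real v" using v pf by linarith
    then have "2 \<le> (\<rho> - 1) * real v" using pf by (simp add: field_simps)
    then show ?thesis unfolding \<rho>2_def by (simp add: algebra_simps field_simps)
  qed
  have kge: "\<rho>2 * real v \<le> real k"
  proof (cases "L \<le> nat \<lfloor>r1 * real v / \<mu>1\<rfloor>")
    case True
    then have "k = L" unfolding k_def by simp
    moreover have "\<rho>2 * real v \<le> m1 * real v" using pf v1 by (simp add: mult_right_mono)
    ultimately show ?thesis using L1 by simp
  next
    case False
    then have "k = nat \<lfloor>r1 * real v / \<mu>1\<rfloor>" unfolding k_def by simp
    then show ?thesis using fl rv rv2 by linarith
  qed
  have k1: "1 \<le> k"
  proof -
    have "\<rho>2 * 1 \<le> \<rho>2 * real v" using v1 pf(10) by (intro mult_left_mono) auto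
    then have "1 < \<rho>2 * real v" using pf(10) by linarith
    then have "1 < real k" using kge by linarith
    then show ?thesis by simp
  qed
  have kL: "k \<le> L" unfolding k_def by simp
  have kmu: "real k * \<mu>1 \<le> r1 * real v"
  proof -
    have "real k \<le> r1 * real v / \<mu>1" unfolding k_def using fl by auto
    then show ?thesis using mu1 by (simp add: field_simps)
  qed
  define B1 where "B1 = {\<omega>\<in>space M. (mD - m1) * real v \<le> \<bar>(\<Sum>j=1..v. real (D n j \<omega>)) - real v * mD\<bar>}"
  define B2 where "B2 = {\<omega>\<in>space M. (mR - r1) * real v \<le> \<bar>(\<Sum>j=1..v. R n j \<omega>) - real v * mR\<bar>}"
  define B3 where "B3 = {\<omega>\<in>space M. (\<mu>1 - mX) * real L \<le> \<bar>(\<Sum>j=1..L. X n j \<omega>) - real L * mX\<bar>}"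
  have sub: "{\<omega>\<in>space M. real (G D X R n v \<omega>) < \<rho>2 * real v} \<subseteq> B1 \<union> B2 \<union> B3"
  proof
    fix \<omega> assume a: "\<omega> \<in> {\<omega>\<in>space M. real (G D X R n v \<omega>) < \<rho>2 * real v}"
    then have \<omega>: "\<omega> \<in> space M" by simp
    show "\<omega> \<in> B1 \<union> B2 \<union> B3"
    proof (rule ccontr)
      assume "\<omega> \<notin> B1 \<union> B2 \<union> B3"
      then have n1: "\<bar>(\<Sum>j=1..v. real (D n j \<omega>)) - real v * mD\<bar> < (mD - m1) * real v"
        and n2: "\<bar>(\<Sum>j=1..v. R n j \<omega>) - real v * mR\<bar> < (mR - r1) * real v"
        and n3: "\<bar>(\<Sum>j=1..L. X n j \<omega>) - real L * mX\<bar> < (\<mu>1 - mX) * real L"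
        using \<omega> unfolding B1_def B2_def B3_def by auto
      have "L \<le> (\<Sum>j=1..v. D n j \<omega>)"
      proof (rule ccontr)
        assume "\<not> ?thesis"
        then have "(\<Sum>j=1..v. D n j \<omega>) + 1 \<le> L" by simp
        then have "real (\<Sum>j=1..v. D n j \<omega>) + 1 \<le> real L" by linarith
        then have "(\<Sum>j=1..v. real (D n j \<omega>)) < m1 * real v" using L1 by simp
        then show False using n1 by (simp add: algebra_simps abs_if split: if_splits)
      qed
      moreover have "real k * (\<Sum>i=1..L. X n i \<omega>) \<le> real L * (\<Sum>j=1..v. R n j \<omega>)"
      proof -
        have sx: "(\<Sum>i=1..L. X n i \<omega>) \<le> \<mu>1 * real L" using n3 by (simp add: algebra_simps abs_if split: if_splits)
        have sr: "r1 * real v \<le> (\<Sum>j=1..v. R n j \<omega>)" using n2 by (simp add: algebra_simps abs_if split: if_splits)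
        have "real k * (\<Sum>i=1..L. X n i \<omega>) \<le> real k * (\<mu>1 * real L)"
          using sx by (intro mult_left_mono) auto
        also have "\<dots> = (real k * \<mu>1) * real L" by simp
        also have "\<dots> \<le> (r1 * real v) * real L" using kmu by (intro mult_right_mono) auto
        also have "\<dots> \<le> (\<Sum>j=1..v. R n j \<omega>) * real L" using sr by (intro mult_right_mono) auto
        finally show ?thesis by (simp add: ac_simps)
      qed
      ultimately have "k \<le> G D X R n v \<omega>" using G_lower[OF \<omega> _ k1 kL] by blast
      then have "\<rho>2 * real v \<le> real (G D X R n v \<omega>)" using kge by linarith
      then show False using a by simp
    qed
  qed
  note D_meas[measurable] X_meas[measurable] R_meas[measurable]
  have mB: "B1 \<in> events" "B2 \<in> events" "B3 \<in> events" unfolding B1_def B2_def B3_def by measurable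
  have "prob {\<omega>\<in>space M. real (G D X R n v \<omega>) < \<rho>2 * real v} \<le> prob (B1 \<union> B2 \<union> B3)"
    using sub mB by (intro finite_measure_mono) auto
  also have "\<dots> \<le> prob B1 + prob B2 + prob B3"
  proof -
    have "prob (B1 \<union> B2 \<union> B3) \<le> prob (B1 \<union> B2) + prob B3" using mB by (intro measure_Un_le) auto
    moreover have "prob (B1 \<union> B2) \<le> prob B1 + prob B2" using mB by (intro measure_Un_le) auto
    ultimately show ?thesis by simp
  qed
  also have "prob B1 \<le> VD / (mD - m1)\<^sup>2 / real v"
  proof -
    have e: "0 < (mD - m1) * real v" using pf v1 by simp
    have "prob B1 \<le> real v * VD / ((mD - m1) * real v)\<^sup>2"
      unfolding B1_def VD_def mD_def using chebD[OF e[unfolded mD_def], where v=v and n=n] by simp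
    also have "\<dots> = VD / (mD - m1)\<^sup>2 / real v" using v1 by (intro aux_div) simp
    finally show ?thesis .
  qed
  also have "prob B2 \<le> VR / (mR - r1)\<^sup>2 / real v"
  proof -
    have e: "0 < (mR - r1) * real v" using pf v1 by simp
    have "prob B2 \<le> real v * VR / ((mR - r1) * real v)\<^sup>2"
      unfolding B2_def VR_def mR_def using chebR[OF e[unfolded mR_def], where v=v and n=n] by simp
    also have "\<dots> = VR / (mR - r1)\<^sup>2 / real v" using v1 by (intro aux_div) simp
    finally show ?thesis .
  qed
  also have "prob B3 \<le> VX / (\<mu>1 - mX)\<^sup>2 / real v"
  proof -
    have L0: "0 < real L" using Lv v1 by simp
    have e: "0 < (\<mu>1 - mX) * real L" using pf L0 by simp
    have "prob B3 \<le> real L * VX / ((\<mu>1 - mX) * real L)\<^sup>2"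
      unfolding B3_def VX_def mX_def using chebX[OF e[unfolded mX_def], where v=L and n=n] by simp
    also have "\<dots> = VX / (\<mu>1 - mX)\<^sup>2 / real L" using L0 by (intro aux_div) simp
    also have "\<dots> \<le> VX / (\<mu>1 - mX)\<^sup>2 / real v"
      using pf v1 Lv by (intro divide_left_mono) auto
    finally show ?thesis .
  qed
  finally show ?thesis unfolding Cst_def by (simp add: add_divide_distrib)
qed

end

context wfi begin

definition Sk :: "nat \<Rightarrow> nat \<Rightarrow> nat \<Rightarrow> 'a set" where
  "Sk n0 w0 k = {\<omega>\<in>space M. W n0 \<omega> = w0 \<and> (\<forall>i<k. \<rho>2 * real (W (n0+i) \<omega>) \<le> real (W (Suc (n0+i)) \<omega>))}"

lemma Sk_grow: "\<omega> \<in> Sk n0 w0 k \<Longrightarrow> \<rho>2 ^ k * real w0 \<le> real (W (n0 + k) \<omega>)"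
proof (induction k)
  case 0 then show ?case by (simp add: Sk_def)
next
  case (Suc k)
  have "\<omega> \<in> Sk n0 w0 k" using Suc.prems by (auto simp: Sk_def)
  then have "\<rho>2 ^ k * real w0 \<le> real (W (n0 + k) \<omega>)" by (rule Suc.IH)
  moreover have "\<rho>2 * real (W (n0+k) \<omega>) \<le> real (W (Suc (n0+k)) \<omega>)" using Suc.prems by (auto simp: Sk_def)
  moreover have "0 \<le> \<rho>2" using par_facts by simp
  ultimately have "\<rho>2 * (\<rho>2 ^ k * real w0) \<le> real (W (Suc (n0+k)) \<omega>)"
    by (meson mult_left_mono order_trans)
  then show ?case by simp
qed

lemma Sk_mono: "k \<le> j \<Longrightarrow> Sk n0 w0 j \<subseteq> Sk n0 w0 k"
  by (auto simp: Sk_def)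

lemma Sk_Sig: "Sk n0 w0 k \<in> sets (Sig (Past (n0 + k)))"
proof -
  let ?N = "Sig (Past (n0 + k))"
  have Wm: "\<And>m. m \<le> n0 + k \<Longrightarrow> (\<lambda>\<omega>. real (W m \<omega>)) \<in> borel_measurable ?N"
    using W_meas_Sig by measurable
  have "Measurable.pred ?N (\<lambda>\<omega>. W n0 \<omega> = w0 \<and> (\<forall>i\<in>{..<k}. \<rho>2 * real (W (n0+i) \<omega>) \<le> real (W (Suc (n0+i)) \<omega>)))"
  proof (intro pred_intros_logic pred_intros_finite)
    show "Measurable.pred ?N (\<lambda>\<omega>. W n0 \<omega> = w0)" using W_meas_Sig[of n0 "n0+k"] by measurable
    fix i assume "i \<in> {..<k}"
    then have "n0 + i \<le> n0 + k" "Suc (n0 + i) \<le> n0 + k" by auto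
    then show "Measurable.pred ?N (\<lambda>\<omega>. \<rho>2 * real (W (n0+i) \<omega>) \<le> real (W (Suc (n0+i)) \<omega>))"
      using Wm by measurable
  qed simp
  then have "{\<omega>\<in>space ?N. W n0 \<omega> = w0 \<and> (\<forall>i\<in>{..<k}. \<rho>2 * real (W (n0+i) \<omega>) \<le> real (W (Suc (n0+i)) \<omega>))} \<in> sets ?N"
    by (simp add: pred_def)
  then show ?thesis unfolding Sk_def by (simp add: lessThan_def)
qed

lemma Sk_events: "Sk n0 w0 k \<in> events"
  using Sk_Sig sets_Sig_sub by blast

definition Bk :: "nat \<Rightarrow> nat \<Rightarrow> nat \<Rightarrow> 'a set" where
  "Bk n0 w0 k = Sk n0 w0 k \<inter> {\<omega>. real (W (Suc (n0+k)) \<omega>) < \<rho>2 * real (W (n0+k) \<omega>)}"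

lemma Bk_events: "Bk n0 w0 k \<in> events"
proof -
  have "{\<omega>\<in>space M. real (W (Suc (n0+k)) \<omega>) < \<rho>2 * real (W (n0+k) \<omega>)} \<in> events" by measurable
  then have "Sk n0 w0 k \<inter> {\<omega>\<in>space M. real (W (Suc (n0+k)) \<omega>) < \<rho>2 * real (W (n0+k) \<omega>)} \<in> events"
    using Sk_events by blast
  moreover have "Sk n0 w0 k \<inter> {\<omega>\<in>space M. real (W (Suc (n0+k)) \<omega>) < \<rho>2 * real (W (n0+k) \<omega>)} = Bk n0 w0 k"
    unfolding Bk_def Sk_def by auto
  ultimately show ?thesis by simp
qed

lemma Bk_bound:
  assumes w0: "V0 \<le> real w0"
  shows "emeasure M (Bk n0 w0 k) \<le> ennreal (Cst / (\<rho>2 ^ k * real w0)) * emeasure M (Sk n0 w0 k)"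
proof -
  note pf = par_facts
  define n where "n = n0 + k"
  define b where "b = Cst / (\<rho>2 ^ k * real w0)"
  define A where "A = (\<lambda>v. Sk n0 w0 k \<inter> {\<omega>\<in>space M. W n \<omega> = v})"
  define F where "F = (\<lambda>v. {\<omega>\<in>space M. real (G D X R n v \<omega>) < \<rho>2 * real v})"
  have AS: "A v \<in> sets (Sig (Past n))" for v
    unfolding A_def n_def using Sk_Sig W_set_Sig by (intro sets.Int) auto
  have FS: "F v \<in> sets (Sig (Row n))" for v
  proof -
    have "(\<lambda>\<omega>. real (G D X R n v \<omega>)) \<in> borel_measurable (Sig (Row n))" using G_meas_Sig by measurable
    then have "{\<omega>\<in>space (Sig (Row n)). real (G D X R n v \<omega>) < \<rho>2 * real v} \<in> sets (Sig (Row n))"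
      by measurable
    then show ?thesis unfolding F_def by simp
  qed
  have AM: "A v \<in> events" and FM: "F v \<in> events" for v using AS FS sets_Sig_sub by blast+
  have Beq: "Bk n0 w0 k = (\<Union>v. A v \<inter> F v)"
    unfolding Bk_def A_def F_def n_def Sk_def by (auto simp: wf_proc_Suc' simp del: wf_proc.simps(2))
  have disj: "disjoint_family (\<lambda>v. A v \<inter> F v)" unfolding disjoint_family_on_def A_def by auto
  have "emeasure M (Bk n0 w0 k) = (\<Sum>v. emeasure M (A v \<inter> F v))"
    unfolding Beq using AM FM disj by (intro suminf_emeasure[symmetric]) auto
  also have "\<dots> \<le> (\<Sum>v. ennreal b * emeasure M (A v))"
  proof (intro suminf_le allI)
    fix v
    show "emeasure M (A v \<inter> F v) \<le> ennreal b * emeasure M (A v)"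
    proof (cases "A v = {}")
      case True then show ?thesis by simp
    next
      case False
      then obtain \<omega> where "\<omega> \<in> A v" by blast
      then have vge2: "\<rho>2 ^ k * real w0 \<le> real v" using Sk_grow unfolding A_def n_def by fastforce
      have "1 \<le> \<rho>2 ^ k" using pf by simp
      have w1: "1 \<le> real w0" using w0 pf by linarith
      have "1 * real w0 \<le> \<rho>2 ^ k * real w0" using mult_right_mono[OF \<open>1 \<le> \<rho>2 ^ k\<close>, of "real w0"] by simp
      then have vge: "real w0 \<le> real v" using vge2 by simp
      have pos: "0 < \<rho>2 ^ k * real w0" using pf w1 by simp
      have "prob (F v) \<le> Cst / real v" unfolding F_def using fail_bound[of v n] w0 vge by simp
      also have "\<dots> \<le> b" unfolding b_def using pf pos vge2 by (intro divide_left_mono) auto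
      finally have Fb: "prob (F v) \<le> b" .
      have "prob (A v \<inter> F v) = prob (A v) * prob (F v)"
        by (rule indep_prob[OF Past_Row_disj Past_sub Row_sub AS FS])
      also have "\<dots> \<le> prob (A v) * b" using Fb by (intro mult_left_mono) auto
      finally have "prob (A v \<inter> F v) \<le> b * prob (A v)" by (simp add: mult.commute)
      then have "ennreal (prob (A v \<inter> F v)) \<le> ennreal (b * prob (A v))" by (rule ennreal_leI)
      also have "\<dots> = ennreal b * ennreal (prob (A v))"
        using pf pos unfolding b_def by (intro ennreal_mult) auto
      finally show ?thesis by (simp add: emeasure_eq_measure)
    qed
  qed auto
  also have "\<dots> = ennreal b * (\<Sum>v. emeasure M (A v))" by simp
  also have "(\<Sum>v. emeasure M (A v)) = emeasure M (\<Union>v. A v)"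
    using AM by (intro suminf_emeasure) (auto simp: disjoint_family_on_def A_def)
  also have "(\<Union>v. A v) = Sk n0 w0 k" unfolding A_def Sk_def by auto
  finally show ?thesis unfolding b_def .
qed

lemma survival:
  assumes reach: "\<And>j. 1 \<le> j \<Longrightarrow> \<exists>n. prob {\<omega>\<in>space M. W n \<omega> = j} > 0"
  shows "prob {\<omega>\<in>space M. (\<lambda>n. W n \<omega>) \<longlonglongrightarrow> 0} < 1"
proof -
  note pf = par_facts
  define w0 where "w0 = nat \<lceil>V0 + 2 * Cst * \<rho>2 / (\<rho>2 - 1)\<rceil>"
  have q0: "0 \<le> 2 * Cst * \<rho>2 / (\<rho>2 - 1)" using pf by simp
  have w0ge: "V0 + 2 * Cst * \<rho>2 / (\<rho>2 - 1) \<le> real w0"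
  proof -
    have "0 \<le> V0 + 2 * Cst * \<rho>2 / (\<rho>2 - 1)" using q0 pf by linarith
    then have c0: "0 \<le> \<lceil>V0 + 2 * Cst * \<rho>2 / (\<rho>2 - 1)\<rceil>" by simp
    have "real w0 = real_of_int \<lceil>V0 + 2 * Cst * \<rho>2 / (\<rho>2 - 1)\<rceil>" unfolding w0_def using c0 by simp
    then show ?thesis using ceiling_correct[of "V0 + 2 * Cst * \<rho>2 / (\<rho>2 - 1)"] by linarith
  qed
  have w0V: "V0 \<le> real w0" using w0ge q0 by linarith
  have w1: "1 \<le> real w0" using w0V pf by linarith
  then have "1 \<le> w0" by simp
  then obtain n0 where p0pos: "0 < prob {\<omega>\<in>space M. W n0 \<omega> = w0}" using reach by blast
  define p0 where "p0 = prob (Sk n0 w0 0)"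
  have "Sk n0 w0 0 = {\<omega>\<in>space M. W n0 \<omega> = w0}" unfolding Sk_def by simp
  then have p0: "0 < p0" unfolding p0_def using p0pos by simp
  define \<theta> where "\<theta> = Cst * \<rho>2 / (real w0 * (\<rho>2 - 1))"
  have \<theta>: "\<theta> \<le> 1 / 2"
  proof -
    have "2 * Cst * \<rho>2 / (\<rho>2 - 1) \<le> real w0" using w0ge pf by linarith
    then have "2 * Cst * \<rho>2 \<le> real w0 * (\<rho>2 - 1)" using pf by (simp add: field_simps)
    then show ?thesis unfolding \<theta>_def using pf w1 by (simp add: field_simps)
  qed
  have \<theta>0: "0 \<le> \<theta>" unfolding \<theta>_def using pf w1 by simp
  define b where "b = (\<lambda>k. Cst / (\<rho>2 ^ k * real w0))"
  have b0: "0 \<le> b k" for k unfolding b_def using pf w1 by simp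
  have bsums: "(\<lambda>k. b k * p0) sums (\<theta> * p0)"
  proof -
    have "(\<lambda>k. (1 / \<rho>2) ^ k) sums (1 / (1 - 1 / \<rho>2))" using pf by (intro geometric_sums) simp
    then have "(\<lambda>k. (Cst / real w0 * p0) * (1 / \<rho>2) ^ k) sums ((Cst / real w0 * p0) * (1 / (1 - 1 / \<rho>2)))"
      by (rule sums_mult)
    moreover have "\<And>k. (Cst / real w0 * p0) * (1 / \<rho>2) ^ k = b k * p0"
      unfolding b_def by (simp add: power_one_over field_simps)
    moreover have "(Cst / real w0 * p0) * (1 / (1 - 1 / \<rho>2)) = \<theta> * p0"
      unfolding \<theta>_def using pf w1 by (simp add: field_simps)
    ultimately show ?thesis by simp
  qed
  have Bev: "\<And>k. Bk n0 w0 k \<in> events" by (rule Bk_events)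
  have Sev: "\<And>k. Sk n0 w0 k \<in> events" by (rule Sk_events)
  have "emeasure M (\<Union>k. Bk n0 w0 k) \<le> (\<Sum>k. emeasure M (Bk n0 w0 k))"
    using Bev by (intro emeasure_subadditive_countably) auto
  also have "\<dots> \<le> (\<Sum>k. ennreal (b k * p0))"
  proof (intro suminf_le allI)
    fix k
    have "emeasure M (Bk n0 w0 k) \<le> ennreal (b k) * emeasure M (Sk n0 w0 k)"
      unfolding b_def by (rule Bk_bound[OF w0V])
    also have "emeasure M (Sk n0 w0 k) \<le> emeasure M (Sk n0 w0 0)"
      using Sev Sk_mono[of 0 k] by (intro emeasure_mono) auto
    also have "\<dots> = ennreal p0" unfolding p0_def using Sev by (simp add: emeasure_eq_measure)
    finally show "emeasure M (Bk n0 w0 k) \<le> ennreal (b k * p0)"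
      using b0 p0 by (simp add: ennreal_mult mult_left_mono)
  qed auto
  also have "\<dots> = ennreal (\<theta> * p0)"
    using bsums b0 p0 by (subst suminf_ennreal2) (auto simp: sums_iff)
  finally have UB: "prob (\<Union>k. Bk n0 w0 k) \<le> \<theta> * p0"
    using \<theta>0 p0 by (simp add: emeasure_eq_measure)
  define I where "I = (\<Inter>k. Sk n0 w0 k)"
  have Iev: "I \<in> events" unfolding I_def using Sev by auto
  have UBev: "(\<Union>k. Bk n0 w0 k) \<in> events" using Bev by auto
  have cover: "Sk n0 w0 0 \<subseteq> I \<union> (\<Union>k. Bk n0 w0 k)"
  proof
    fix \<omega> assume \<omega>0: "\<omega> \<in> Sk n0 w0 0"
    have "\<omega> \<in> Sk n0 w0 k \<or> (\<exists>j<k. \<omega> \<in> Bk n0 w0 j)" for k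
    proof (induction k)
      case 0 then show ?case using \<omega>0 by simp
    next
      case (Suc k)
      then show ?case
      proof
        assume S: "\<omega> \<in> Sk n0 w0 k"
        show ?thesis
        proof (cases "\<rho>2 * real (W (n0+k) \<omega>) \<le> real (W (Suc (n0+k)) \<omega>)")
          case True
          then have "\<omega> \<in> Sk n0 w0 (Suc k)" using S unfolding Sk_def by (auto simp: less_Suc_eq)
          then show ?thesis by simp
        next
          case False
          then have "\<omega> \<in> Bk n0 w0 k" using S unfolding Bk_def by simp
          then show ?thesis by blast
        qed
      next
        assume "\<exists>j<k. \<omega> \<in> Bk n0 w0 j"
        then show ?thesis by (meson less_SucI)
      qed
    qed
    then show "\<omega> \<in> I \<union> (\<Union>k. Bk n0 w0 k)" unfolding I_def by blast
  qed
  have "p0 \<le> prob (I \<union> (\<Union>k. Bk n0 w0 k))"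
    unfolding p0_def using cover Iev UBev by (intro finite_measure_mono) auto
  also have "\<dots> \<le> prob I + prob (\<Union>k. Bk n0 w0 k)" using Iev UBev by (rule measure_Un_le)
  finally have "p0 \<le> prob I + \<theta> * p0" using UB by simp
  moreover have "\<theta> * p0 \<le> (1/2) * p0" using \<theta> p0 by (intro mult_right_mono) auto
  ultimately have Ipos: "0 < prob I" using p0 by linarith
  have disj: "{\<omega>\<in>space M. (\<lambda>n. W n \<omega>) \<longlonglongrightarrow> 0} \<subseteq> space M - I"
  proof safe
    fix \<omega> assume \<omega>: "\<omega> \<in> space M" and t: "(\<lambda>n. W n \<omega>) \<longlonglongrightarrow> 0" and "\<omega> \<in> I"
    then have Sall: "\<And>k. \<omega> \<in> Sk n0 w0 k" unfolding I_def by blast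
    obtain n where "W n \<omega> = 0" using t W_tendsto_iff by blast
    then have "W (n + n0) \<omega> = 0" by (rule W_absorb)
    moreover have "\<rho>2 ^ n * real w0 \<le> real (W (n0 + n) \<omega>)" by (rule Sk_grow[OF Sall])
    moreover have "0 < \<rho>2 ^ n * real w0" using pf w1 by simp
    ultimately show False by (simp add: add.commute)
  qed
  have "prob {\<omega>\<in>space M. (\<lambda>n. W n \<omega>) \<longlonglongrightarrow> 0} \<le> prob (space M - I)"
    using disj Iev by (intro finite_measure_mono) auto
  also have "\<dots> = 1 - prob I" using Iev by (rule prob_compl)
  finally show ?thesis using Ipos by simp
qed

end

theorem mainTheorem6:
  fixes M :: "'a measure"
    and D :: "nat \<Rightarrow> nat \<Rightarrow> 'a \<Rightarrow> nat"
    and X R :: "nat \<Rightarrow> nat \<Rightarrow> 'a \<Rightarrow> real"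
  assumes P: "prob_space M"
    and D_meas: "\<And>n k. D n k \<in> measurable M (count_space UNIV)"
    and X_meas: "\<And>n k. X n k \<in> borel_measurable M"
    and R_meas: "\<And>n k. R n k \<in> borel_measurable M"
    and indep: "prob_space.indep_vars M (\<lambda>_. borel) (wf_family D X R) wf_index"
    and D_id: "\<And>n k. 1 \<le> k \<Longrightarrow> distr M (count_space UNIV) (D n k) = distr M (count_space UNIV) (D 0 1)"
    and X_id: "\<And>n k. 1 \<le> k \<Longrightarrow> distr M borel (X n k) = distr M borel (X 0 1)"
    and R_id: "\<And>n k. 1 \<le> k \<Longrightarrow> distr M borel (R n k) = distr M borel (R 0 1)"
    and X_nonneg: "\<And>n k \<omega>. \<omega> \<in> space M \<Longrightarrow> X n k \<omega> \<ge> 0"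
    and R_nonneg: "\<And>n k \<omega>. \<omega> \<in> space M \<Longrightarrow> R n k \<omega> \<ge> 0"
    and F_cont: "\<And>x. isCont (cdf (distr M borel (X 0 1))) x"
    \<comment> \<open>(A1) and (A4): finite means and finite variances\<close>
    and D_int: "integrable M (\<lambda>\<omega>. real (D 0 1 \<omega>))"
    and X_int: "integrable M (X 0 1)"
    and R_int: "integrable M (R 0 1)"
    and D_sq: "integrable M (\<lambda>\<omega>. (real (D 0 1 \<omega>))\<^sup>2)"
    and X_sq: "integrable M (\<lambda>\<omega>. (X 0 1 \<omega>)\<^sup>2)"
    and R_sq: "integrable M (\<lambda>\<omega>. (R 0 1 \<omega>)\<^sup>2)"
    and m_gt1: "1 < prob_space.expectation M (\<lambda>\<omega>. real (D 0 1 \<omega>))"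
    and mu_pos: "0 < prob_space.expectation M (X 0 1)"
    \<comment> \<open>(A2)\<close>
    and p0: "prob_space.prob M {\<omega> \<in> space M. D 0 1 \<omega> = 0} > 0"
    and pk: "\<exists>k\<ge>2. prob_space.prob M {\<omega> \<in> space M. D 0 1 \<omega> = k} > 0"
    \<comment> \<open>(A3)\<close>
    and reach: "\<And>j. 1 \<le> j \<Longrightarrow> \<exists>n. prob_space.prob M {\<omega> \<in> space M. wf_proc D X R n \<omega> = j} > 0"
  defines "m \<equiv> prob_space.expectation M (\<lambda>\<omega>. real (D 0 1 \<omega>))"
    and "\<mu> \<equiv> prob_space.expectation M (X 0 1)"
    and "r \<equiv> prob_space.expectation M (R 0 1)"
    and "qW \<equiv> prob_space.prob M {\<omega> \<in> space M. (\<lambda>n. wf_proc D X R n \<omega>) \<longlonglongrightarrow> 0}"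
  shows "(\<mu> < r \<longrightarrow> qW < 1)
       \<and> (r \<le> m * \<mu> * (1 - sqrt (1 - 1 / m)) \<longrightarrow>
            prob_space.variance M (X 0 1) < (m * \<mu> - r)\<^sup>2 / (m * (m - 1)) - \<mu>\<^sup>2 \<longrightarrow>
            qW = 1)"
  proof -
  interpret wfp M D X R
    by (intro wfp.intro wfs.intro wfs_axioms.intro wfp_axioms.intro P D_meas X_meas R_meas indep
        X_nonneg R_nonneg D_id X_id R_id D_sq X_sq R_sq D_int X_int R_int)
  have i: "\<mu> < r \<longrightarrow> qW < 1"
  proof
    assume "\<mu> < r"
    interpret wfi M D X R
    proof (intro wfi.intro wfi_axioms.intro)
      show "wfp M D X R" ..
      show "1 < (\<integral>\<omega>. real (D 0 1 \<omega>) \<partial>M)" using m_gt1 .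
      show "0 < (\<integral>\<omega>. X 0 1 \<omega> \<partial>M)" using mu_pos .
      show "(\<integral>\<omega>. X 0 1 \<omega> \<partial>M) < (\<integral>\<omega>. R 0 1 \<omega> \<partial>M)" using \<open>\<mu> < r\<close> unfolding \<mu>_def r_def .
    qed
    show "qW < 1" unfolding qW_def using survival reach by blast
  qed
  have ii: "r \<le> m * \<mu> * (1 - sqrt (1 - 1 / m)) \<longrightarrow>
            variance (X 0 1) < (m * \<mu> - r)\<^sup>2 / (m * (m - 1)) - \<mu>\<^sup>2 \<longrightarrow> qW = 1"
    using partii m_gt1 mu_pos unfolding m_def \<mu>_def r_def qW_def by blast
  show ?thesis using i ii by blast
qed


end
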